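(* Let $H_0,H_I$ be Hermitian operators on a finite-dimensional Hilbert space and $\beta>0$. Then for every $k\ge1$, $$\mathcal{M}_k(\beta)=(-1)^k\sum_{\omega_1,\dots,\omega_{k-1}}g_k(\beta;\omega_1,\dots,\omega_{k-1})\,D_{\omega_1}\cdots D_{\omega_{k-1}}D_{-\omega_1-\dots-\omega_{k-1}},$$ the sum running over Bohr frequencies $\omega_1,\dots,\omega_{k-1}$ of $H_0$, where, writing $s_l=\sum_{j=1}^l\omega_j$, $$g_k(\beta;\omega_1,\dots,\omega_{k-1})=\frac{1}{\prod_{l=1}^{k-1}s_l}\Big(\beta-\sum_{l=1}^{k-1}\frac1{s_l}\Big)-\sum_{p=1}^{k-1}\frac{(-1)^p e^{-\beta s_p}}{\Big(\prod_{m=2}^p\sum_{i=m}^p\omega_i\Big)s_p^2\Big(\prod_{l=p+1}^{k-1}\sum_{j=p+1}^l\omega_j\Big)}$$ (empty products equal $1$), and for frequency tuples for which some denominator vanishes, $g_k$ is understood as the limit (continuous extension) of this expression. In particular $\mathcal{M}_1(\beta)=-\beta D_0$.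
   Context: $H_0=\sum_\varepsilon\varepsilon\Pi_\varepsilon$ is the spectral decomposition of $H_0$ (distinct eigenvalues, orthogonal spectral projectors). $\mathcal{P}X=\sum_\varepsilon\Pi_\varepsilon X\Pi_\varepsilon$ (equivalently the long-time average $\lim_{T\to\infty}\frac1T\int_0^Te^{iH_0t}Xe^{-iH_0t}dt$). Bohr frequencies are the differences $\varepsilon'-\varepsilon$ of eigenvalues of $H_0$ (eigenvalues of $[H_0,\cdot]$ up to sign). For real $\nu$ set $D_\nu=\sum_{\varepsilon,\varepsilon':\,\varepsilon'-\varepsilon=\nu}\Pi_\varepsilon H_I\Pi_{\varepsilon'}$ (zero if $\nu$ is not a Bohr frequency), so $H_I=\sum_\omega D_\omega$, $[H_0,D_\omega]=-\omega D_\omega$, $D_{-\omega}=D_\omega^\dagger$. $\mathcal{M}_k(\beta)=(-1)^k\int_0^\beta d\beta_1\int_0^{\beta_1}d\beta_2\cdots\int_0^{\beta_{k-1}}d\beta_k\,\mathcal{P}(H_I(\beta_1)\cdots H_I(\beta_k))$ with $H_I(s)=e^{sH_0}H_Ie^{-sH_0}$. *)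

theory Defs
  imports "HOL-Analysis.Analysis"
begin

type_synonym 'n cmat = "complex ^'n ^'n"

(* conjugate transpose *)
definition cadj :: "'n::finite cmat \<Rightarrow> 'n cmat" where
  "cadj A = (\<chi> i j. cnj (A $ j $ i))"

definition hermitian :: "'n::finite cmat \<Rightarrow> bool" where
  "hermitian A \<longleftrightarrow> cadj A = A"

(* matrix power and matrix exponential (power series) *)
definition mpow :: "'n::finite cmat \<Rightarrow> nat \<Rightarrow> 'n cmat" where
  "mpow A n = (((**) A) ^^ n) (mat 1)"

definition mexp :: "'n::finite cmat \<Rightarrow> 'n cmat" where
  "mexp A = (\<Sum>n. (1 / fact n) *\<^sub>R mpow A n)"

(* ordered product of a list of matrices *)
definition mprod :: "'n::finite cmat list \<Rightarrow> 'n cmat" where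
  "mprod xs = foldr (**) xs (mat 1)"

(* eigenvalues (real, as H0 is Hermitian) *)
definition eigvals :: "'n::finite cmat \<Rightarrow> real set" where
  "eigvals H = {e. \<exists>v. v \<noteq> 0 \<and> H *v v = complex_of_real e *s v}"

definition eigspace :: "'n::finite cmat \<Rightarrow> real \<Rightarrow> (complex ^'n) set" where
  "eigspace H e = {v. H *v v = complex_of_real e *s v}"

(* orthogonal spectral projector onto the eigenspace *)
definition specproj :: "'n::finite cmat \<Rightarrow> real \<Rightarrow> 'n cmat" where
  "specproj H e = (THE P. P ** P = P \<and> cadj P = P \<and> range ((*v) P) = eigspace H e)"

(* pinching / dephasing map  P X = sum_e Pi_e X Pi_e *)
definition pinch :: "'n::finite cmat \<Rightarrow> 'n cmat \<Rightarrow> 'n cmat" where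
  "pinch H X = (\<Sum>e\<in>eigvals H. specproj H e ** X ** specproj H e)"

definition bohr :: "'n::finite cmat \<Rightarrow> real set" where
  "bohr H = {e' - e | e e'. e \<in> eigvals H \<and> e' \<in> eigvals H}"

(* D_nu = sum_{e'-e = nu} Pi_e H_I Pi_e' *)
definition Dop :: "'n::finite cmat \<Rightarrow> 'n cmat \<Rightarrow> real \<Rightarrow> 'n cmat" where
  "Dop H0 HI nu = (\<Sum>(e, e')\<in>{(e, e'). e \<in> eigvals H0 \<and> e' \<in> eigvals H0 \<and> e' - e = nu}.
                     specproj H0 e ** HI ** specproj H0 e')"

(* imaginary-time evolved interaction  H_I(s) = e^{s H0} H_I e^{-s H0} *)
definition HIt :: "'n::finite cmat \<Rightarrow> 'n cmat \<Rightarrow> real \<Rightarrow> 'n cmat" where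
  "HIt H0 HI s = mexp (s *\<^sub>R H0) ** HI ** mexp ((- s) *\<^sub>R H0)"

(* nested integral  int_0^b dt1 int_0^t1 dt2 ... int_0^{t_{k-1}} dtk  f [t1,...,tk] *)
fun nested_int :: "nat \<Rightarrow> real \<Rightarrow> (real list \<Rightarrow> 'a::euclidean_space) \<Rightarrow> 'a" where
  "nested_int 0 b f = f []"
| "nested_int (Suc m) b f = integral {0..b} (\<lambda>t. nested_int m t (\<lambda>ts. f (t # ts)))"

definition Mk :: "'n::finite cmat \<Rightarrow> 'n cmat \<Rightarrow> nat \<Rightarrow> real \<Rightarrow> 'n cmat" where
  "Mk H0 HI k \<beta> = ((-1) ^ k) *\<^sub>R
     nested_int k \<beta> (\<lambda>ts. pinch H0 (mprod (map (HIt H0 HI) ts)))"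

(* the explicit expression for g_k; omega is indexed by 1..k-1 *)
definition gexpr :: "nat \<Rightarrow> real \<Rightarrow> (nat \<Rightarrow> real) \<Rightarrow> real" where
  "gexpr k \<beta> \<omega> =
     (let s = (\<lambda>l. \<Sum>j=1..l. \<omega> j) in
      (1 / (\<Prod>l=1..k-1. s l)) * (\<beta> - (\<Sum>l=1..k-1. 1 / s l))
      - (\<Sum>p=1..k-1. (-1) ^ p * exp (- \<beta> * s p) /
           ((\<Prod>m=2..p. \<Sum>i=m..p. \<omega> i) * (s p)\<^sup>2 * (\<Prod>l=p+1..k-1. \<Sum>j=p+1..l. \<omega> j))))"

(* frequency tuples for which no denominator vanishes *)
definition nondeg :: "nat \<Rightarrow> (nat \<Rightarrow> real) set" where
  "nondeg k = {\<omega>. \<forall>m l. 1 \<le> m \<and> m \<le> l \<and> l \<le> k - 1 \<longrightarrow> (\<Sum>j=m..l. \<omega> j) \<noteq> 0}"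

(* g_k: the expression, extended by its limit where denominators vanish *)
definition gk :: "nat \<Rightarrow> real \<Rightarrow> (nat \<Rightarrow> real) \<Rightarrow> real" where
  "gk k \<beta> \<omega> = (if \<omega> \<in> nondeg k then gexpr k \<beta> \<omega>
                 else Lim (at \<omega> within nondeg k) (gexpr k \<beta>))"

end

theory Submission
  imports Defs
begin

(* ---- part Dd2 ---- *)
definition dd :: "(real \<Rightarrow> real) \<Rightarrow> (nat \<Rightarrow> real) \<Rightarrow> nat set \<Rightarrow> real" where
  "dd g x S = (\<Sum>j\<in>S. g (x j) / (\<Prod>i\<in>S - {j}. (x i - x j)))"

lemma prod_diff_nz:
  fixes x :: "'a \<Rightarrow> real"
  assumes "finite A" "inj_on x (insert j A)"
  shows "(\<Prod>i\<in>A - {j}. (x i - x j)) \<noteq> 0"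
proof
  assume "(\<Prod>i\<in>A - {j}. (x i - x j)) = 0"
  then have "\<exists>i\<in>A - {j}. x i - x j = 0" using assms(1) prod_zero_iff[of "A - {j}" "\<lambda>i. x i - x j"] by blast
  then obtain i where "i \<in> A - {j}" "x i - x j = 0" by blast
  then show False using assms(2) by (auto simp: inj_on_def)
qed

lemma dd_rec:
  assumes fin: "finite S" and inj: "inj_on x S" and a: "a \<in> S" and b: "b \<in> S" and ab: "a \<noteq> b"
  shows "dd g x S = (dd g x (S - {b}) - dd g x (S - {a})) / (x b - x a)"
proof -
  define R where "R = S - {a, b}"
  define F where "F A j = g (x j) / (\<Prod>i\<in>A - {j}. (x i - x j))" for A j
  have finR: "finite R" unfolding R_def using fin by simp
  have aR: "a \<notin> R" and bR: "b \<notin> R" unfolding R_def by auto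
  have S1: "S = insert a (insert b R)" unfolding R_def using a b by auto
  have S2: "S - {b} = insert a R" unfolding R_def using a b ab by auto
  have S3: "S - {a} = insert b R" unfolding R_def using a b ab by auto
  have xab: "x b - x a \<noteq> 0" using inj a b ab by (auto simp: inj_on_def)
  have ddF: "dd g x A = (\<Sum>j\<in>A. F A j)" for A unfolding dd_def F_def by simp
  have Fj: "F S j = (F (S - {b}) j - F (S - {a}) j) / (x b - x a)" if j: "j \<in> R" for j
  proof -
    define P where "P = (\<Prod>i\<in>R - {j}. (x i - x j))"
    have jS: "j \<in> S" "j \<noteq> a" "j \<noteq> b" using j unfolding R_def by auto
    have "insert j R \<subseteq> S" using jS unfolding R_def by auto
    then have "inj_on x (insert j R)" using inj inj_on_subset by blast
    then have Pnz: "P \<noteq> 0" unfolding P_def by (rule prod_diff_nz[OF finR])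
    have da: "x a - x j \<noteq> 0" and db: "x b - x j \<noteq> 0" using inj jS a b by (auto simp: inj_on_def)
    have e1: "S - {j} = insert a (insert b (R - {j}))" using S1 jS by auto
    have e2: "S - {b} - {j} = insert a (R - {j})" using S2 jS by auto
    have e3: "S - {a} - {j} = insert b (R - {j})" using S3 jS by auto
    have p1: "(\<Prod>i\<in>S - {j}. (x i - x j)) = (x a - x j) * ((x b - x j) * P)"
      unfolding e1 P_def using finR aR bR ab by simp
    have p2: "(\<Prod>i\<in>S - {b} - {j}. (x i - x j)) = (x a - x j) * P"
      unfolding e2 P_def using finR aR by simp
    have p3: "(\<Prod>i\<in>S - {a} - {j}. (x i - x j)) = (x b - x j) * P"
      unfolding e3 P_def using finR bR by simp
    have alg: "\<And>G P da db::real. P \<noteq> 0 \<Longrightarrow> da \<noteq> 0 \<Longrightarrow> db \<noteq> 0 \<Longrightarrow> db - da \<noteq> 0 \<Longrightarrow>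
        G / (da * (db * P)) = (G / (da * P) - G / (db * P)) / (db - da)"
      by (simp add: field_simps)
    have "(x b - x j) - (x a - x j) = x b - x a" by simp
    then show ?thesis unfolding F_def p1 p2 p3 using alg[OF Pnz da db] xab by metis
  qed
  have Fa: "F S a = F (S - {b}) a / (x b - x a)"
  proof -
    define P where "P = (\<Prod>i\<in>R. (x i - x a))"
    have "S - {a} = insert b R" by (rule S3)
    moreover have "S - {b} - {a} = R" using S2 aR by auto
    ultimately show ?thesis unfolding F_def P_def using finR bR by (simp add: divide_divide_eq_left mult.commute)
  qed
  have Fb: "F S b = - F (S - {a}) b / (x b - x a)"
  proof -
    have "S - {b} = insert a R" by (rule S2)
    moreover have "S - {a} - {b} = R" using S3 bR by auto
    moreover have "\<And>G P::real. G / ((x a - x b) * P) = - (G / P) / (x b - x a)"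
    proof -
      fix G P :: real
      have "x a - x b = - (x b - x a)" by simp
      then have "G / ((x a - x b) * P) = G / (- ((x b - x a) * P))"
        by (simp only: minus_diff_eq[symmetric, of "x b" "x a"] mult_minus_left)
      also have "\<dots> = - (G / P) / (x b - x a)" by (simp add: divide_divide_eq_left mult.commute)
      finally show "G / ((x a - x b) * P) = - (G / P) / (x b - x a)" .
    qed
    ultimately show ?thesis unfolding F_def using finR aR by simp
  qed
  have sum3: "\<And>T f. T = insert a (insert b R) \<Longrightarrow> (\<Sum>j\<in>T. f j) = f a + f b + (\<Sum>j\<in>R. f j)"
    using finR aR bR ab by (simp add: add.assoc)
  have sum2a: "\<And>T f. T = insert a R \<Longrightarrow> (\<Sum>j\<in>T. f j) = f a + (\<Sum>j\<in>R. f j)"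
    using finR aR by simp
  have sum2b: "\<And>T f. T = insert b R \<Longrightarrow> (\<Sum>j\<in>T. f j) = f b + (\<Sum>j\<in>R. f j)"
    using finR bR by simp
  have d1: "dd g x S = F S a + F S b + (\<Sum>j\<in>R. F S j)"
    unfolding ddF by (rule sum3[OF S1])
  have d2: "dd g x (S - {b}) = F (S - {b}) a + (\<Sum>j\<in>R. F (S - {b}) j)"
    unfolding ddF by (rule sum2a[OF S2])
  have d3: "dd g x (S - {a}) = F (S - {a}) b + (\<Sum>j\<in>R. F (S - {a}) j)"
    unfolding ddF by (rule sum2b[OF S3])
  have sR: "(\<Sum>j\<in>R. F S j) = ((\<Sum>j\<in>R. F (S - {b}) j) - (\<Sum>j\<in>R. F (S - {a}) j)) / (x b - x a)"
    by (simp add: sum.cong[OF refl Fj] sum_divide_distrib[symmetric] sum_subtractf)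
  have alg: "\<And>A B1 C B2 D::real. D \<noteq> 0 \<Longrightarrow> A / D + - C / D + (B1 - B2) / D = ((A + B1) - (C + B2)) / D"
    by (simp add: field_simps)
  show ?thesis unfolding d1 d2 d3 sR Fa Fb by (rule alg[OF xab])
qed

lemma two_elems:
  assumes "finite S" "card S \<ge> 2"
  obtains a b where "a \<in> S" "b \<in> S" "a \<noteq> b"
proof -
  from assms obtain a where a: "a \<in> S" by fastforce
  have "card (S - {a}) \<ge> 1" using assms a by simp
  then have "S - {a} \<noteq> {}" by (metis card.empty not_one_le_zero)
  then obtain b where "b \<in> S - {a}" by blast
  then show ?thesis using that a by auto
qed

lemma dd_const:
  assumes "finite S" "inj_on x S" "card S \<ge> 2"
  shows "dd (\<lambda>_. 1) x S = 0"
  using assms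
proof (induction "card S" arbitrary: S rule: less_induct)
  case less
  obtain a b where ab: "a \<in> S" "b \<in> S" "a \<noteq> b" using two_elems[OF less.prems(1,3)] by blast
  have rec: "dd (\<lambda>_. 1) x S = (dd (\<lambda>_. 1) x (S - {b}) - dd (\<lambda>_. 1) x (S - {a})) / (x b - x a)"
    by (rule dd_rec[OF less.prems(1) less.prems(2) ab])
  show ?case
  proof (cases "card S = 2")
    case True
    have "card (S - {a, b}) = 0" using True ab less.prems(1) by (simp add: card_Diff_subset)
    then have "S - {a, b} = {}" using less.prems(1) by simp
    then have "S = {a, b}" using ab by auto
    then have "S - {b} = {a}" "S - {a} = {b}" using ab by auto
    then show ?thesis using rec by (simp add: dd_def)
  next
    case False
    have c1: "card (S - {b}) = card S - 1" "card (S - {a}) = card S - 1"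
      using ab less.prems(1) by (simp_all add: card_Diff_singleton)
    have c: "card (S - {b}) \<ge> 2" "card (S - {a}) \<ge> 2" "card (S - {b}) < card S" "card (S - {a}) < card S"
      using False less.prems(3) unfolding c1 by linarith+
    have fin: "finite (S - {b})" "finite (S - {a})" using less.prems(1) by auto
    have inj: "inj_on x (S - {b})" "inj_on x (S - {a})" using inj_on_subset[OF less.prems(2) Diff_subset] by auto
    have "dd (\<lambda>_. 1) x (S - {b}) = 0" by (rule less.hyps[OF c(3) fin(1) inj(1) c(1)])
    moreover have "dd (\<lambda>_. 1) x (S - {a}) = 0" by (rule less.hyps[OF c(4) fin(2) inj(2) c(2)])
    ultimately show ?thesis using rec by simp
  qed
qed

lemma dd_invsq:
  assumes "finite S" "inj_on x S" "S \<noteq> {}" "\<And>j. j \<in> S \<Longrightarrow> x j \<noteq> 0"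
  shows "dd (\<lambda>y. 1 / y^2) x S = (1 / (\<Prod>j\<in>S. x j)) * (\<Sum>j\<in>S. 1 / x j)"
  using assms
proof (induction "card S" arbitrary: S rule: less_induct)
  case less
  show ?case
  proof (cases "card S \<ge> 2")
    case False
    moreover have "card S > 0" using less.prems(1,3) by (simp add: card_gt_0_iff)
    ultimately have "card S = 1" by linarith
    then obtain a where S: "S = {a}" by (auto simp: card_Suc_eq)
    then show ?thesis by (simp add: dd_def power2_eq_square)
  next
    case True
    obtain a b where ab: "a \<in> S" "b \<in> S" "a \<noteq> b" using two_elems[OF less.prems(1) True] by blast
    have rec: "dd (\<lambda>y. 1 / y^2) x S = (dd (\<lambda>y. 1 / y^2) x (S - {b}) - dd (\<lambda>y. 1 / y^2) x (S - {a})) / (x b - x a)"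
      by (rule dd_rec[OF less.prems(1) less.prems(2) ab])
    have c: "card (S - {b}) < card S" "card (S - {a}) < card S"
      using card_Diff1_less[OF less.prems(1) ab(2)] card_Diff1_less[OF less.prems(1) ab(1)] by auto
    have ne: "S - {b} \<noteq> {}" "S - {a} \<noteq> {}" using ab by auto
    have fin: "finite (S - {b})" "finite (S - {a})" using less.prems(1) by auto
    have inj: "inj_on x (S - {b})" "inj_on x (S - {a})" using inj_on_subset[OF less.prems(2) Diff_subset] by auto
    have nz: "\<And>j. j \<in> S - {b} \<Longrightarrow> x j \<noteq> 0" "\<And>j. j \<in> S - {a} \<Longrightarrow> x j \<noteq> 0"
      using less.prems(4) by auto
    have IH1: "dd (\<lambda>y. 1 / y^2) x (S - {b}) = (1 / (\<Prod>j\<in>S - {b}. x j)) * (\<Sum>j\<in>S - {b}. 1 / x j)"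
      by (rule less.hyps[OF c(1) fin(1) inj(1) ne(1) nz(1)])
    have IH2: "dd (\<lambda>y. 1 / y^2) x (S - {a}) = (1 / (\<Prod>j\<in>S - {a}. x j)) * (\<Sum>j\<in>S - {a}. 1 / x j)"
      by (rule less.hyps[OF c(2) fin(2) inj(2) ne(2) nz(2)])
    define P where "P = (\<Prod>j\<in>S. x j)"
    define Q where "Q = (\<Sum>j\<in>S. 1 / x j)"
    have Pnz: "P \<noteq> 0" unfolding P_def using less.prems by simp
    have xa: "x a \<noteq> 0" and xb: "x b \<noteq> 0" using less.prems ab by auto
    have xab: "x b - x a \<noteq> 0" using less.prems(2) ab by (auto simp: inj_on_def)
    have Pb: "(\<Prod>j\<in>S - {b}. x j) = P / x b" unfolding P_def
      using prod.remove[OF less.prems(1) ab(2), of x] xb by simp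
    have Pa: "(\<Prod>j\<in>S - {a}. x j) = P / x a" unfolding P_def
      using prod.remove[OF less.prems(1) ab(1), of x] xa by simp
    have Qb: "(\<Sum>j\<in>S - {b}. 1 / x j) = Q - 1 / x b" unfolding Q_def
      using sum.remove[OF less.prems(1) ab(2), of "\<lambda>j. 1 / x j"] by simp
    have Qa: "(\<Sum>j\<in>S - {a}. 1 / x j) = Q - 1 / x a" unfolding Q_def
      using sum.remove[OF less.prems(1) ab(1), of "\<lambda>j. 1 / x j"] by simp
    have alg: "\<And>P Q xa xb::real. P \<noteq> 0 \<Longrightarrow> xa \<noteq> 0 \<Longrightarrow> xb \<noteq> 0 \<Longrightarrow> xb - xa \<noteq> 0 \<Longrightarrow>
      ((1 / (P / xb)) * (Q - 1 / xb) - (1 / (P / xa)) * (Q - 1 / xa)) / (xb - xa) = (1 / P) * Q"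
      by (simp add: field_simps)
    show ?thesis unfolding rec IH1 IH2 Pa Pb Qa Qb P_def[symmetric] Q_def[symmetric]
      by (rule alg[OF Pnz xa xb xab])
  qed
qed

(* ---- part A ---- *)
definition cinner :: "complex^'n::finite \<Rightarrow> complex^'n \<Rightarrow> complex" where
  "cinner x y = (\<Sum>i\<in>UNIV. cnj (x$i) * y$i)"

lemma cinner_adj: "cinner (A *v x) y = cinner x (cadj A *v y)"
proof -
  have "cinner (A *v x) y = (\<Sum>i\<in>UNIV. \<Sum>j\<in>UNIV. cnj (A$i$j) * cnj (x$j) * y$i)"
    unfolding cinner_def matrix_vector_mult_def
    by (simp add: sum_distrib_right)
  also have "\<dots> = (\<Sum>j\<in>UNIV. \<Sum>i\<in>UNIV. cnj (A$i$j) * cnj (x$j) * y$i)"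
    by (rule sum.swap)
  also have "\<dots> = cinner x (cadj A *v y)"
    unfolding cinner_def matrix_vector_mult_def cadj_def
    by (simp add: sum_distrib_left mult_ac)
  finally show ?thesis .
qed

lemma Re_cinner: "Re (cinner x y) = x \<bullet> y"
  unfolding cinner_def inner_vec_def by (simp add: Re_sum inner_complex_def)

lemma cinner_diff_left: "cinner (x - y) z = cinner x z - cinner y z"
  unfolding cinner_def by (simp add: sum_subtractf algebra_simps)
lemma cinner_add_left: "cinner (x + y) z = cinner x z + cinner y z"
  unfolding cinner_def by (simp add: sum.distrib algebra_simps)
lemma cinner_diff_right: "cinner z (x - y) = cinner z x - cinner z y"
  unfolding cinner_def by (simp add: sum_subtractf algebra_simps)
lemma cinner_add_right: "cinner z (x + y) = cinner z x + cinner z y"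
  unfolding cinner_def by (simp add: sum.distrib algebra_simps)
lemma cinner_scaleR_left: "cinner (r *\<^sub>R x) y = of_real r * cinner x y"
  unfolding cinner_def by (simp only: vector_scaleR_component) (simp add: sum_distrib_left scaleR_conv_of_real mult_ac)
lemma cinner_scaleR_right: "cinner x (r *\<^sub>R y) = of_real r * cinner x y"
  unfolding cinner_def by (simp only: vector_scaleR_component) (simp add: sum_distrib_left scaleR_conv_of_real mult_ac)
lemma cinner_zero_left[simp]: "cinner 0 y = 0" unfolding cinner_def by simp
lemma cinner_zero_right[simp]: "cinner x 0 = 0" unfolding cinner_def by simp

lemma cinner_self_eq_0: "cinner x x = 0 \<Longrightarrow> x = 0"
  by (metis Re_cinner inner_eq_zero_iff zero_complex.sel(1))

lemma linear_cinner_left: "linear (\<lambda>x. cinner x y)"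
proof (rule linearI)
  show "cinner (b1 + b2) y = cinner b1 y + cinner b2 y" for b1 b2 by (rule cinner_add_left)
  show "cinner (r *\<^sub>R b) y = r *\<^sub>R cinner b y" for r b
    by (subst cinner_scaleR_left) (simp add: scaleR_conv_of_real)
qed
lemma linear_cinner_right: "linear (\<lambda>y. cinner x y)"
proof (rule linearI)
  show "cinner x (b1 + b2) = cinner x b1 + cinner x b2" for b1 b2 by (rule cinner_add_right)
  show "cinner x (r *\<^sub>R b) = r *\<^sub>R cinner x b" for r b
    by (subst cinner_scaleR_right) (simp add: scaleR_conv_of_real)
qed

lemma mat_eq_cinner:
  fixes A B :: "complex^'n::finite^'n"
  assumes "\<And>x y. cinner x (A *v y) = cinner x (B *v y)"
  shows "A = B"
proof -
  have "A *v y = B *v y" for y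
  proof -
    have "cinner (A *v y - B *v y) (A *v y - B *v y) = 0"
      using assms by (simp add: cinner_diff_right)
    then show ?thesis by (metis cinner_self_eq_0 eq_iff_diff_eq_0)
  qed
  then show ?thesis by (simp add: matrix_eq)
qed

lemma cadj_mult: "cadj (A ** B) = cadj B ** cadj (A :: complex^'n::finite^'n)"
  unfolding cadj_def matrix_matrix_mult_def
  by (simp add: vec_eq_iff mult.commute)

lemma hermitian_sym:
  assumes "hermitian H"
  shows "cinner (H *v x) y = cinner x (H *v y)"
  using assms cinner_adj unfolding hermitian_def by metis

lemma hermitian_sym_real:
  assumes "hermitian H"
  shows "(H *v x) \<bullet> y = x \<bullet> (H *v y)"
  using hermitian_sym[OF assms] Re_cinner by metis

lemma mv_scaleR_left: "(c *\<^sub>R A) *v x = c *\<^sub>R (A *v (x::complex^'n::finite))"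
  by (simp add: vec_eq_iff matrix_vector_mult_def scaleR_sum_right)
lemma mv_scaleR_right: "A *v (c *\<^sub>R x) = c *\<^sub>R (A *v (x::complex^'n::finite))"
  using matrix_vector_mul_linear[of A] by (simp add: linear_iff)

lemma scaleR_of_real_vec: "(c::real) *\<^sub>R (x::complex^'n::finite) = complex_of_real c *s x"
  by (simp only: vec_eq_iff vector_scaleR_component vector_smult_component) (simp add: scaleR_conv_of_real)

lemma quad_zero:
  fixes a b :: real
  assumes "\<And>t. a * t + b * t^2 \<le> 0"
  shows "a = 0"
proof (rule ccontr)
  assume "a \<noteq> 0"
  define s where "s = \<bar>b\<bar> + 1"
  have pos: "s > 0" unfolding s_def by simp
  define t where "t = a / s"
  have "- \<bar>b\<bar> * t^2 \<le> b * t^2"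
    by (intro mult_right_mono) auto
  moreover have "a * t - \<bar>b\<bar> * t^2 = a^2 / s^2"
  proof -
    have "\<bar>b\<bar> = s - 1" unfolding s_def by simp
    then have "a * t - \<bar>b\<bar> * t^2 = a * a / s - (s - 1) * (a * a / (s * s))"
      unfolding t_def power2_eq_square by simp
    also have "\<dots> = a * a / (s * s)" using pos by (simp add: field_simps)
    finally show ?thesis by (simp add: power2_eq_square)
  qed
  moreover have "a^2 / s^2 > 0"
    using \<open>a \<noteq> 0\<close> pos by simp
  ultimately show False using assms[of t] by linarith
qed


lemma cont_mv: "continuous_on S (\<lambda>x. (H::complex^'n::finite^'n) *v x)"
  using matrix_vector_mul_linear[of H] linear_continuous_on linear_conv_bounded_linear by blast

lemma eigvec_in_subspace:
  fixes H :: "complex^'n::finite^'n"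
  assumes herm: "hermitian H" and W: "subspace W" and inv: "\<And>w. w \<in> W \<Longrightarrow> H *v w \<in> W"
    and ne: "w0 \<in> W" "w0 \<noteq> 0"
  shows "\<exists>v\<in>W. v \<noteq> 0 \<and> (\<exists>l::real. H *v v = l *\<^sub>R v)"
proof -
  define K where "K = sphere 0 1 \<inter> W"
  have "compact K" unfolding K_def
    by (simp add: W closed_subspace compact_Int_closed)
  have "w0 /\<^sub>R norm w0 \<in> K" unfolding K_def using ne
    by (simp add: subspace_scale[OF W])
  then have "K \<noteq> {}" by auto
  have "continuous_on K (\<lambda>v. v \<bullet> (H *v v))"
    by (intro continuous_intros cont_mv)
  from continuous_attains_sup[OF \<open>compact K\<close> \<open>K \<noteq> {}\<close> this]
  obtain v where vK: "v \<in> K" and vmax: "\<And>y. y \<in> K \<Longrightarrow> y \<bullet> (H *v y) \<le> v \<bullet> (H *v v)"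
    by blast
  define l where "l = v \<bullet> (H *v v)"
  have vW: "v \<in> W" and nv: "norm v = 1" using vK unfolding K_def by auto
  then have vv: "v \<bullet> v = 1" by (simp add: norm_eq_1)
  have key: "w \<bullet> (H *v v) = l * (v \<bullet> w)" if wW: "w \<in> W" for w
  proof -
    have ineq: "(v + t *\<^sub>R w) \<bullet> (H *v (v + t *\<^sub>R w)) \<le> l * ((v + t *\<^sub>R w) \<bullet> (v + t *\<^sub>R w))" for t
    proof (cases "v + t *\<^sub>R w = 0")
      case True then show ?thesis by simp
    next
      case False
      define u where "u = v + t *\<^sub>R w"
      define n where "n = norm u"
      have npos: "n > 0" using False unfolding n_def u_def by simp
      have uW: "u \<in> W" unfolding u_def using vW wW W by (simp add: subspace_add subspace_scale)
      have "u /\<^sub>R n \<in> K" unfolding K_def n_def using uW npos n_def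
        by (simp add: subspace_scale[OF W])
      then have "(u /\<^sub>R n) \<bullet> (H *v (u /\<^sub>R n)) \<le> l" using vmax l_def by blast
      then have "(u \<bullet> (H *v u)) / n^2 \<le> l"
        by (simp add: mv_scaleR_right power2_eq_square divide_inverse mult_ac)
      then have "u \<bullet> (H *v u) \<le> l * n^2" using npos by (simp add: divide_le_eq)
      moreover have "n^2 = u \<bullet> u" unfolding n_def by (simp add: power2_norm_eq_inner)
      ultimately show ?thesis unfolding u_def by simp
    qed
    have e1: "(v + t *\<^sub>R w) \<bullet> (H *v (v + t *\<^sub>R w)) = l + 2*t*(w \<bullet> (H *v v)) + t^2 * (w \<bullet> (H *v w))" for t
    proof -
      have s: "v \<bullet> (H *v w) = w \<bullet> (H *v v)"
        using hermitian_sym_real[OF herm, of v w] by (simp add: inner_commute)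
      show ?thesis unfolding l_def
        by (simp add: matrix_vector_right_distrib mv_scaleR_right inner_add_left inner_add_right s
            power2_eq_square algebra_simps)
    qed
    have e2: "(v + t *\<^sub>R w) \<bullet> (v + t *\<^sub>R w) = 1 + 2*t*(v \<bullet> w) + t^2*(w \<bullet> w)" for t
      using vv by (simp add: inner_add_left inner_add_right inner_commute power2_eq_square algebra_simps)
    have "(2*(w \<bullet> (H *v v) - l * (v \<bullet> w))) * t + (w \<bullet> (H *v w) - l * (w \<bullet> w)) * t^2 \<le> 0" for t
    proof -
      have "l + 2*t*(w \<bullet> (H *v v)) + t^2 * (w \<bullet> (H *v w)) \<le> l * (1 + 2*t*(v \<bullet> w) + t^2*(w \<bullet> w))"
        using ineq[of t] by (simp only: e1 e2)
      then show ?thesis by (simp add: algebra_simps)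
    qed
    from quad_zero[OF this] show ?thesis by simp
  qed
  define z where "z = H *v v - l *\<^sub>R v"
  have zW: "z \<in> W" unfolding z_def using inv[OF vW] vW W by (simp add: subspace_diff subspace_scale)
  have "z \<bullet> z = z \<bullet> (H *v v) - l * (z \<bullet> v)"
    unfolding z_def by (simp add: inner_diff_right)
  also have "\<dots> = 0" using key[OF zW] by (simp add: inner_commute)
  finally have "z = 0" by simp
  then show ?thesis using vW nv by (intro bexI[of _ v]) (auto simp: z_def)
qed

definition EV :: "complex^'n::finite^'n \<Rightarrow> (complex^'n) set" where
  "EV H = {v. \<exists>e::real. H *v v = e *\<^sub>R v}"

lemma eig_span:
  fixes H :: "complex^'n::finite^'n"
  assumes herm: "hermitian H"
  shows "x \<in> span (EV H)"
proof -
  define W where "W = {y. \<forall>x \<in> EV H. orthogonal x y}"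
  have W: "subspace W" unfolding W_def by (rule subspace_orthogonal_to_vectors)
  have inv: "H *v y \<in> W" if "y \<in> W" for y
  proof (unfold W_def, intro CollectI ballI)
    fix x assume "x \<in> EV H"
    then obtain e where e: "H *v x = e *\<^sub>R x" unfolding EV_def by auto
    have "x \<bullet> (H *v y) = (H *v x) \<bullet> y" using hermitian_sym_real[OF herm] by simp
    also have "\<dots> = e * (x \<bullet> y)" using e by simp
    also have "\<dots> = 0" using that \<open>x \<in> EV H\<close> unfolding W_def orthogonal_def by auto
    finally show "orthogonal x (H *v y)" unfolding orthogonal_def .
  qed
  have W0: "y = 0" if "y \<in> W" for y
  proof (rule ccontr)
    assume "y \<noteq> 0"
    from eigvec_in_subspace[OF herm W inv that this]
    obtain v l where "v \<in> W" "v \<noteq> 0" "H *v v = l *\<^sub>R v" by blast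
    then have "v \<in> EV H" unfolding EV_def by auto
    with \<open>v \<in> W\<close> have "orthogonal v v" unfolding W_def by auto
    with \<open>v \<noteq> 0\<close> show False by (simp add: orthogonal_def)
  qed
  obtain y z where y: "y \<in> span (EV H)" and z: "\<And>w. w \<in> span (EV H) \<Longrightarrow> orthogonal z w"
    and xyz: "x = y + z"
    by (rule orthogonal_subspace_decomp_exists[of "EV H" x]) blast
  have "z \<in> W" unfolding W_def using z span_base by (auto simp: orthogonal_commute)
  then have "z = 0" by (rule W0)
  then show ?thesis using xyz y by simp
qed


lemma eig_orth:
  assumes herm: "hermitian H" and x: "H *v x = e *\<^sub>R x" and y: "H *v y = f *\<^sub>R y" and ef: "e \<noteq> f"
  shows "cinner x y = 0"
proof -
  have "cinner (H *v x) y = cinner x (H *v y)" by (rule hermitian_sym[OF herm])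
  then have "of_real e * cinner x y = of_real f * cinner x y"
    using x y by (simp add: cinner_scaleR_left cinner_scaleR_right)
  then have "(of_real e - of_real f) * cinner x y = 0" by (simp add: algebra_simps)
  then show ?thesis using ef by simp
qed

lemma eigvals_iff: "e \<in> eigvals H \<longleftrightarrow> (\<exists>v. v \<noteq> 0 \<and> H *v v = e *\<^sub>R v)"
  unfolding eigvals_def by (simp add: scaleR_of_real_vec)

lemma eigspace_iff: "v \<in> eigspace H e \<longleftrightarrow> H *v v = e *\<^sub>R v"
  unfolding eigspace_def by (simp add: scaleR_of_real_vec)

lemma finite_eigvals:
  assumes herm: "hermitian H"
  shows "finite (eigvals H)"
proof -
  have "\<forall>e\<in>eigvals H. \<exists>v. v \<noteq> 0 \<and> H *v v = e *\<^sub>R v" using eigvals_iff by blast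
  then obtain vf where vf: "\<And>e. e \<in> eigvals H \<Longrightarrow> vf e \<noteq> 0 \<and> H *v vf e = e *\<^sub>R vf e"
    by metis
  have inj: "inj_on vf (eigvals H)"
  proof (rule inj_onI, rule ccontr)
    fix e f assume ef: "e \<in> eigvals H" "f \<in> eigvals H" "vf e = vf f" "e \<noteq> f"
    then have "cinner (vf e) (vf f) = 0" using eig_orth[OF herm] vf by metis
    then have "vf e = 0" using ef(3) cinner_self_eq_0 by metis
    then show False using vf ef by blast
  qed
  have "pairwise orthogonal (vf ` eigvals H)"
    unfolding pairwise_def orthogonal_def
  proof clarify
    fix e f assume ef: "e \<in> eigvals H" "f \<in> eigvals H" "vf e \<noteq> vf f"
    then have "e \<noteq> f" by auto
    then have "cinner (vf e) (vf f) = 0" using eig_orth[OF herm] vf ef by metis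
    then show "vf e \<bullet> vf f = 0" using Re_cinner by (metis zero_complex.sel(1))
  qed
  moreover have "0 \<notin> vf ` eigvals H" using vf by auto
  ultimately have "independent (vf ` eigvals H)" by (rule pairwise_orthogonal_independent)
  then have "finite (vf ` eigvals H)" by (rule finiteI_independent)
  then show ?thesis using inj finite_imageD by blast
qed

definition lag :: "complex^'n::finite^'n \<Rightarrow> real \<Rightarrow> complex^'n^'n" where
  "lag H e = foldr (\<lambda>f M. ((1/(e-f)) *\<^sub>R (H - f *\<^sub>R mat 1)) ** M) (sorted_list_of_set (eigvals H - {e})) (mat 1)"

lemma lag_foldr:
  fixes H :: "complex^'n::finite^'n"
  assumes "H *v x = g *\<^sub>R x"
  shows "foldr (\<lambda>f M. ((1/(e-f)) *\<^sub>R (H - f *\<^sub>R mat 1)) ** M) fs (mat 1) *v x = (\<Prod>f\<leftarrow>fs. (g-f)/(e-f)) *\<^sub>R x"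
proof (induction fs)
  case Nil then show ?case by simp
next
  case (Cons f fs)
  let ?M = "foldr (\<lambda>f M. ((1/(e-f)) *\<^sub>R (H - f *\<^sub>R mat 1)) ** M) fs (mat 1)"
  let ?p = "\<Prod>f\<leftarrow>fs. (g-f)/(e-f)"
  have "foldr (\<lambda>f M. ((1/(e-f)) *\<^sub>R (H - f *\<^sub>R mat 1)) ** M) (f # fs) (mat 1) *v x
      = (1/(e-f)) *\<^sub>R ((H - f *\<^sub>R mat 1) *v (?M *v x))"
    by (simp add: matrix_vector_mul_assoc[symmetric]) (rule mv_scaleR_left)
  also have "\<dots> = (1/(e-f)) *\<^sub>R ((H - f *\<^sub>R mat 1) *v (?p *\<^sub>R x))" using Cons by simp
  also have "\<dots> = ((g-f)/(e-f) * ?p) *\<^sub>R x"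
    using assms by (simp add: matrix_vector_mult_diff_rdistrib mv_scaleR_left mv_scaleR_right
        algebra_simps divide_inverse)
  finally show ?case by simp
qed

lemma EV_nonzero: "hermitian H \<Longrightarrow> H *v x = g *\<^sub>R x \<Longrightarrow> x \<noteq> 0 \<Longrightarrow> g \<in> eigvals H"
  using eigvals_iff by blast

lemma lag_eig:
  assumes herm: "hermitian H" and x: "H *v x = g *\<^sub>R x"
  shows "lag H e *v x = (if g = e then x else 0)"
proof (cases "x = 0")
  case True then show ?thesis by simp
next
  case False
  then have g: "g \<in> eigvals H" using EV_nonzero[OF herm x] by simp
  have fin: "finite (eigvals H - {e})" using finite_eigvals[OF herm] by simp
  have "lag H e *v x = (\<Prod>f\<in>eigvals H - {e}. (g-f)/(e-f)) *\<^sub>R x"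
    unfolding lag_def lag_foldr[OF x]
    using prod.distinct_set_conv_list[of "sorted_list_of_set (eigvals H - {e})" "\<lambda>f. (g-f)/(e-f)"] fin
    by simp
  also have "\<dots> = (if g = e then x else 0)"
  proof (cases "g = e")
    case True
    then have "(\<Prod>f\<in>eigvals H - {e}. (g-f)/(e-f)) = 1" by (intro prod.neutral) auto
    then show ?thesis using True by simp
  next
    case False
    then have "(\<Prod>f\<in>eigvals H - {e}. (g-f)/(e-f)) = 0" using g fin
      by (intro prod_zero) auto
    then show ?thesis using False by simp
  qed
  finally show ?thesis .
qed

lemma mat_eq_on_EV:
  fixes A B :: "complex^'n::finite^'n"
  assumes herm: "hermitian H" and eq: "\<And>x g. H *v x = g *\<^sub>R x \<Longrightarrow> A *v x = B *v x"
  shows "A = B"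
proof -
  have "A *v x = B *v x" for x
    by (rule linear_eq_on_span[OF matrix_vector_mul_linear matrix_vector_mul_linear _ eig_span[OF herm]])
       (auto simp: EV_def intro: eq)
  then show ?thesis by (simp add: matrix_eq)
qed

lemma sum_mv: "(\<Sum>i\<in>S. A i) *v x = (\<Sum>i\<in>S. A i *v (x::complex^'n::finite))"
  by (induction S rule: infinite_finite_induct) (simp_all add: matrix_vector_mult_add_rdistrib)

lemma lag_idem: assumes herm: "hermitian H" shows "lag H e ** lag H e = lag H e"
proof (rule mat_eq_on_EV[OF herm])
  fix x g assume x: "H *v x = g *\<^sub>R x"
  show "(lag H e ** lag H e) *v x = lag H e *v x"
    using lag_eig[OF herm x] by (simp add: matrix_vector_mul_assoc[symmetric])
qed

lemma lag_orth: assumes herm: "hermitian H" and ef: "e \<noteq> f" shows "lag H e ** lag H f = 0"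
proof (rule mat_eq_on_EV[OF herm])
  fix x g assume x: "H *v x = g *\<^sub>R x"
  show "(lag H e ** lag H f) *v x = 0 *v x"
    using lag_eig[OF herm x] ef by (simp add: matrix_vector_mul_assoc[symmetric])
qed

lemma lag_sum: "hermitian H \<Longrightarrow> (\<Sum>e\<in>eigvals H. lag H e) = mat 1"
proof (rule mat_eq_on_EV)
  fix x g assume herm: "hermitian H" and x: "H *v x = g *\<^sub>R x"
  show "(\<Sum>e\<in>eigvals H. lag H e) *v x = mat 1 *v x"
  proof (cases "x = 0")
    case True then show ?thesis by simp
  next
    case False
    then have g: "g \<in> eigvals H" using EV_nonzero[OF herm x] by simp
    have "(\<Sum>e\<in>eigvals H. lag H e) *v x = (\<Sum>e\<in>eigvals H. if g = e then x else 0)"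
      unfolding sum_mv using lag_eig[OF herm x] by simp
    also have "\<dots> = x" using g finite_eigvals[OF herm] by simp
    finally show ?thesis by simp
  qed
qed

lemma lag_H1: assumes herm: "hermitian H" shows "H ** lag H e = e *\<^sub>R lag H e"
proof (rule mat_eq_on_EV[OF herm])
  fix x g assume x: "H *v x = g *\<^sub>R x"
  show "(H ** lag H e) *v x = (e *\<^sub>R lag H e) *v x"
    using lag_eig[OF herm x] x by (simp add: matrix_vector_mul_assoc[symmetric] mv_scaleR_left)
qed

lemma lag_H2: assumes herm: "hermitian H" shows "lag H e ** H = e *\<^sub>R lag H e"
proof (rule mat_eq_on_EV[OF herm])
  fix x g assume x: "H *v x = g *\<^sub>R x"
  show "(lag H e ** H) *v x = (e *\<^sub>R lag H e) *v x"
    using lag_eig[OF herm x] x by (simp add: matrix_vector_mul_assoc[symmetric] mv_scaleR_left mv_scaleR_right)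
qed

lemma lag_herm:
  assumes herm: "hermitian H"
  shows "cadj (lag H e) = lag H e"
proof -
  let ?L = "lag H e"
  have evev: "cinner (?L *v x) y = cinner x (?L *v y)" if x: "H *v x = g *\<^sub>R x" and y: "H *v y = h *\<^sub>R y" for x y g h
  proof (cases "g = h")
    case True then show ?thesis using lag_eig[OF herm x] lag_eig[OF herm y] by simp
  next
    case False
    then have "cinner x y = 0" using eig_orth[OF herm x y] by simp
    then show ?thesis using lag_eig[OF herm x] lag_eig[OF herm y] by simp
  qed
  have evall: "cinner (?L *v x) y = cinner x (?L *v y)" if x: "H *v x = g *\<^sub>R x" for x g y
    by (rule linear_eq_on_span[OF linear_cinner_right linear_compose[OF matrix_vector_mul_linear linear_cinner_right, unfolded o_def] _ eig_span[OF herm]])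
       (auto simp: EV_def intro: evev[OF x])
  have all: "cinner (?L *v x) y = cinner x (?L *v y)" for x y
    by (rule linear_eq_on_span[OF linear_compose[OF matrix_vector_mul_linear linear_cinner_left, unfolded o_def] linear_cinner_left _ eig_span[OF herm]])
       (auto simp: EV_def intro: evall)
  show ?thesis
    by (rule mat_eq_cinner) (simp add: cinner_adj[symmetric] all)
qed

lemma lag_range:
  assumes herm: "hermitian H"
  shows "range ((*v) (lag H e)) = eigspace H e"
proof
  show "range ((*v) (lag H e)) \<subseteq> eigspace H e"
    using lag_H1[OF herm] by (auto simp: eigspace_iff matrix_vector_mul_assoc mv_scaleR_left)
  show "eigspace H e \<subseteq> range ((*v) (lag H e))"
  proof
    fix x assume "x \<in> eigspace H e"
    then have "lag H e *v x = x" using lag_eig[OF herm, of x e e] by (simp add: eigspace_iff)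
    then show "x \<in> range ((*v) (lag H e))" by (metis rangeI)
  qed
qed

lemma proj_unique:
  fixes P Q :: "complex^'n::finite^'n"
  assumes P: "P ** P = P" "cadj P = P" and Q: "Q ** Q = Q" "cadj Q = Q"
    and r: "range ((*v) P) = range ((*v) Q)"
  shows "P = Q"
proof -
  have PQ: "P ** Q = Q"
  proof -
    have "(P ** Q) *v y = Q *v y" for y
    proof -
      have "Q *v y \<in> range ((*v) P)" using r by auto
      then obtain z where z: "Q *v y = P *v z" by auto
      show ?thesis by (simp add: matrix_vector_mul_assoc[symmetric] z) (simp add: matrix_vector_mul_assoc P(1))
    qed
    then show ?thesis by (simp add: matrix_eq)
  qed
  have QP: "Q ** P = P"
  proof -
    have "(Q ** P) *v y = P *v y" for y
    proof -
      have "P *v y \<in> range ((*v) Q)" using r by auto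
      then obtain z where z: "P *v y = Q *v z" by auto
      show ?thesis by (simp add: matrix_vector_mul_assoc[symmetric] z) (simp add: matrix_vector_mul_assoc Q(1))
    qed
    then show ?thesis by (simp add: matrix_eq)
  qed
  have "P = cadj (Q ** P)" using QP P(2) by simp
  also have "\<dots> = P ** Q" by (simp add: cadj_mult P(2) Q(2))
  also have "\<dots> = Q" by (rule PQ)
  finally show ?thesis .
qed

lemma specproj_lag:
  assumes herm: "hermitian H"
  shows "specproj H e = lag H e"
  unfolding specproj_def
proof (rule the_equality)
  show "lag H e ** lag H e = lag H e \<and> cadj (lag H e) = lag H e \<and> range ((*v) (lag H e)) = eigspace H e"
    using lag_idem[OF herm] lag_herm[OF herm] lag_range[OF herm] by simp
  fix P assume "P ** P = P \<and> cadj P = P \<and> range ((*v) P) = eigspace H e"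
  then show "P = lag H e"
    using proj_unique[of P "lag H e"] lag_idem[OF herm] lag_herm[OF herm] lag_range[OF herm] by simp
qed

lemma spec_mult: "hermitian H \<Longrightarrow> specproj H e ** specproj H f = (if e = f then specproj H e else 0)"
  by (simp add: specproj_lag lag_idem lag_orth)

lemma spec_sum: "hermitian H \<Longrightarrow> (\<Sum>e\<in>eigvals H. specproj H e) = mat 1"
  by (simp add: specproj_lag lag_sum)

lemma spec_H1: "hermitian H \<Longrightarrow> H ** specproj H e = e *\<^sub>R specproj H e"
  by (simp add: specproj_lag lag_H1)

lemma spec_H2: "hermitian H \<Longrightarrow> specproj H e ** H = e *\<^sub>R specproj H e"
  by (simp add: specproj_lag lag_H2)

(* ---- part B ---- *)
type_synonym 'n cm = "complex^'n^'n"

lemma mm_add_left: "(A + C) ** B = A ** B + C ** (B :: complex^'n::finite^'n)"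
  by (simp add: vec_eq_iff matrix_matrix_mult_def sum.distrib distrib_right)

lemma mm_sum_left: "(\<Sum>i\<in>S. A i) ** (B :: complex^'n::finite^'n) = (\<Sum>i\<in>S. A i ** B)"
  by (induction S rule: infinite_finite_induct) (simp_all add: mm_add_left)

lemma mm_sum_right: "(B :: complex^'n::finite^'n) ** (\<Sum>i\<in>S. A i) = (\<Sum>i\<in>S. B ** A i)"
  by (induction S rule: infinite_finite_induct) (simp_all add: matrix_add_ldistrib)

lemma mm_scaleR_left: "(c *\<^sub>R A) ** B = c *\<^sub>R (A ** (B :: complex^'n::finite^'n))"
  by (simp add: scalar_matrix_assoc)

lemma mm_scaleR_right: "A ** (c *\<^sub>R B) = c *\<^sub>R (A ** (B :: complex^'n::finite^'n))"
  by (simp add: matrix_scalar_ac scalar_matrix_assoc)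

lemma mpow_0: "mpow A 0 = mat 1" unfolding mpow_def by simp
lemma mpow_Suc: "mpow A (Suc n) = A ** mpow A n" unfolding mpow_def by simp

lemma mpow_spec:
  fixes H :: "complex^'n::finite^'n"
  assumes herm: "hermitian H"
  shows "mpow (s *\<^sub>R H) n = (\<Sum>e\<in>eigvals H. (s*e)^n *\<^sub>R specproj H e)"
proof (induction n)
  case 0 then show ?case by (simp add: mpow_0 spec_sum[OF herm])
next
  case (Suc n)
  have "mpow (s *\<^sub>R H) (Suc n) = (\<Sum>e\<in>eigvals H. (s*e)^n *\<^sub>R (s *\<^sub>R (H ** specproj H e)))"
    by (simp add: mpow_Suc Suc mm_sum_right mm_scaleR_left mm_scaleR_right)
  also have "\<dots> = (\<Sum>e\<in>eigvals H. (s*e)^(Suc n) *\<^sub>R specproj H e)"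
    by (simp add: spec_H1[OF herm] mult_ac)
  finally show ?case .
qed

lemma mexp_spec:
  fixes H :: "complex^'n::finite^'n"
  assumes herm: "hermitian H"
  shows "mexp (s *\<^sub>R H) = (\<Sum>e\<in>eigvals H. exp (s*e) *\<^sub>R specproj H e)"
proof -
  have "mexp (s *\<^sub>R H) = (\<Sum>n. \<Sum>e\<in>eigvals H. ((s*e)^n /\<^sub>R fact n) *\<^sub>R specproj H e)"
    unfolding mexp_def mpow_spec[OF herm] by (simp add: scaleR_sum_right divide_inverse mult_ac)
  also have "\<dots> = (\<Sum>e\<in>eigvals H. \<Sum>n. ((s*e)^n /\<^sub>R fact n) *\<^sub>R specproj H e)"
    by (rule suminf_sum) (intro summable_scaleR_left summable_exp_generic)
  also have "\<dots> = (\<Sum>e\<in>eigvals H. (\<Sum>n. inverse (fact n) * (s*e)^n) *\<^sub>R specproj H e)"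
    by (simp add: suminf_scaleR_left[OF summable_exp])
  also have "\<dots> = (\<Sum>e\<in>eigvals H. exp (s*e) *\<^sub>R specproj H e)"
  proof -
    have "exp x = (\<Sum>n. inverse (fact n) * x^n)" for x :: real
      by (simp add: exp_def field_simps)
    then show ?thesis by simp
  qed
  finally show ?thesis .
qed

lemma finite_bohr: "hermitian H \<Longrightarrow> finite (bohr H)"
proof -
  assume herm: "hermitian H"
  have "bohr H = (\<lambda>p. snd p - fst p) ` (eigvals H \<times> eigvals H)"
    unfolding bohr_def by force
  then show ?thesis using finite_eigvals[OF herm] by simp
qed

lemma Dop_alt: "Dop H0 HI nu = (\<Sum>p\<in>{p \<in> eigvals H0 \<times> eigvals H0. snd p - fst p = nu}.
     specproj H0 (fst p) ** HI ** specproj H0 (snd p))"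
  unfolding Dop_def
  by (rule sum.cong) (auto simp: case_prod_beta)

lemma HIt_spec:
  fixes H0 HI :: "complex^'n::finite^'n"
  assumes herm: "hermitian H0"
  shows "HIt H0 HI t = (\<Sum>nu\<in>bohr H0. exp (- (t * nu)) *\<^sub>R Dop H0 HI nu)"
proof -
  let ?P = "specproj H0" and ?L = "eigvals H0"
  have "HIt H0 HI t = (\<Sum>f\<in>?L. \<Sum>e\<in>?L. (exp (- (t * f)) * exp (t*e)) *\<^sub>R (?P e ** HI ** ?P f))"
    unfolding HIt_def mexp_spec[OF herm]
    by (simp add: mm_sum_left mm_sum_right mm_scaleR_left mm_scaleR_right matrix_mul_assoc scaleR_sum_right)
  also have "\<dots> = (\<Sum>e\<in>?L. \<Sum>f\<in>?L. (exp (- (t * f)) * exp (t*e)) *\<^sub>R (?P e ** HI ** ?P f))"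
    by (rule sum.swap)
  also have "\<dots> = (\<Sum>p\<in>?L \<times> ?L. exp (- (t * (snd p - fst p))) *\<^sub>R (?P (fst p) ** HI ** ?P (snd p)))"
    by (simp add: sum.cartesian_product case_prod_beta exp_add[symmetric] algebra_simps)
  also have "\<dots> = (\<Sum>nu\<in>bohr H0. \<Sum>p\<in>{p \<in> ?L \<times> ?L. snd p - fst p = nu}.
       exp (- (t * (snd p - fst p))) *\<^sub>R (?P (fst p) ** HI ** ?P (snd p)))"
  proof (rule sum.group[symmetric])
    show "finite (?L \<times> ?L)" using finite_eigvals[OF herm] by simp
    show "finite (bohr H0)" by (rule finite_bohr[OF herm])
    show "(\<lambda>p. snd p - fst p) ` (?L \<times> ?L) \<subseteq> bohr H0" unfolding bohr_def by force
  qed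
  also have "\<dots> = (\<Sum>nu\<in>bohr H0. exp (- (t * nu)) *\<^sub>R Dop H0 HI nu)"
    unfolding Dop_alt scaleR_sum_right by (intro sum.cong refl) auto
  finally show ?thesis .
qed

lemma mprod_Nil: "mprod [] = mat 1" unfolding mprod_def by simp
lemma mprod_Cons: "mprod (x # xs) = x ** mprod xs" unfolding mprod_def by simp
lemma mprod_append: "mprod (xs @ ys) = mprod xs ** mprod ys"
  by (induction xs) (simp_all add: mprod_Nil mprod_Cons matrix_mul_assoc)

definition LS :: "real set \<Rightarrow> nat \<Rightarrow> real list set" where
  "LS B n = {xs. set xs \<subseteq> B \<and> length xs = n}"

lemma mprod_HIt:
  fixes H0 HI :: "complex^'n::finite^'n"
  assumes herm: "hermitian H0"
  shows "mprod (map (HIt H0 HI) ts) = (\<Sum>ns\<in>LS (bohr H0) (length ts).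
           exp (- (\<Sum>i<length ts. ns!i * ts!i)) *\<^sub>R mprod (map (Dop H0 HI) ns))"
proof (induction ts)
  case Nil
  have "LS (bohr H0) 0 = {[]}" unfolding LS_def by auto
  then show ?case by (simp add: mprod_Nil)
next
  case (Cons t ts)
  let ?B = "bohr H0" and ?n = "length ts"
  let ?c = "\<lambda>ns. exp (- (\<Sum>i<?n. ns!i * ts!i))" and ?M = "\<lambda>ns. mprod (map (Dop H0 HI) ns)"
  have fin: "finite ?B" by (rule finite_bohr[OF herm])
  have "mprod (map (HIt H0 HI) (t # ts)) = (\<Sum>ns\<in>LS ?B ?n. \<Sum>nu\<in>?B.
          (?c ns * exp (- (t * nu))) *\<^sub>R (Dop H0 HI nu ** ?M ns))"
    by (simp add: mprod_Cons Cons HIt_spec[OF herm] mm_sum_left mm_sum_right mm_scaleR_left mm_scaleR_right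
        scaleR_sum_right)
  also have "\<dots> = (\<Sum>p\<in>LS ?B ?n \<times> ?B. (exp (- (t * snd p)) * ?c (fst p)) *\<^sub>R (Dop H0 HI (snd p) ** ?M (fst p)))"
    by (simp add: sum.cartesian_product case_prod_beta mult.commute)
  also have "\<dots> = (\<Sum>ys\<in>(\<lambda>(xs, n). n#xs) ` (LS ?B ?n \<times> ?B).
          exp (- (\<Sum>i<length (t#ts). ys!i * (t#ts)!i)) *\<^sub>R ?M ys)"
  proof (subst sum.reindex)
    show "inj_on (\<lambda>(xs, n). n#xs) (LS ?B ?n \<times> ?B)" by (auto simp: inj_on_def)
    show "(\<Sum>p\<in>LS ?B ?n \<times> ?B. (exp (- (t * snd p)) * ?c (fst p)) *\<^sub>R (Dop H0 HI (snd p) ** ?M (fst p))) =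
      (\<Sum>p\<in>LS ?B ?n \<times> ?B. ((\<lambda>ys. exp (- (\<Sum>i<length (t#ts). ys!i * (t#ts)!i)) *\<^sub>R ?M ys) \<circ> (\<lambda>(xs, n). n#xs)) p)"
      by (intro sum.cong refl)
         (auto simp del: sum.lessThan_Suc simp: LS_def sum.lessThan_Suc_shift exp_add[symmetric] mprod_Cons mult.commute)
  qed
  also have "(\<lambda>(xs, n). n#xs) ` (LS ?B ?n \<times> ?B) = LS ?B (length (t#ts))"
    unfolding LS_def by (simp add: lists_length_Suc_eq)
  finally show ?case .
qed


lemma Dop_sandwich:
  fixes H0 HI :: "complex^'n::finite^'n"
  assumes herm: "hermitian H0" and a: "a \<in> eigvals H0" and c: "c \<in> eigvals H0"
  shows "specproj H0 a ** Dop H0 HI nu ** specproj H0 c =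
         (if c - a = nu then specproj H0 a ** HI ** specproj H0 c else 0)"
proof -
  let ?P = "specproj H0" and ?L = "eigvals H0"
  let ?S = "{p \<in> ?L \<times> ?L. snd p - fst p = nu}"
  have fin: "finite ?S" using finite_eigvals[OF herm] by simp
  have "?P a ** Dop H0 HI nu ** ?P c = (\<Sum>p\<in>?S. ?P a ** (?P (fst p) ** HI ** ?P (snd p)) ** ?P c)"
    unfolding Dop_alt by (simp add: mm_sum_left mm_sum_right)
  also have "\<dots> = (\<Sum>p\<in>?S. if (a, c) = p then ?P a ** HI ** ?P c else 0)"
  proof (rule sum.cong[OF refl])
    fix p assume "p \<in> ?S"
    have "?P a ** (?P (fst p) ** HI ** ?P (snd p)) ** ?P c = (?P a ** ?P (fst p)) ** HI ** (?P (snd p) ** ?P c)"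
      by (simp add: matrix_mul_assoc)
    then show "?P a ** (?P (fst p) ** HI ** ?P (snd p)) ** ?P c = (if (a, c) = p then ?P a ** HI ** ?P c else 0)"
      by (cases p) (auto simp: spec_mult[OF herm])
  qed
  also have "\<dots> = (if (a, c) \<in> ?S then ?P a ** HI ** ?P c else 0)"
    by (rule sum.delta'[OF fin])
  finally show ?thesis using a c by auto
qed

lemma prod_sandwich:
  fixes H0 HI :: "complex^'n::finite^'n"
  assumes herm: "hermitian H0"
  shows "a \<in> eigvals H0 \<Longrightarrow> b \<in> eigvals H0 \<Longrightarrow> b - a \<noteq> sum_list ns \<Longrightarrow>
     specproj H0 a ** mprod (map (Dop H0 HI) ns) ** specproj H0 b = 0"
proof (induction ns arbitrary: a)
  case Nil
  then show ?case by (simp add: mprod_Nil spec_mult[OF herm])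
next
  case (Cons nu ns)
  let ?P = "specproj H0" and ?L = "eigvals H0" and ?D = "Dop H0 HI" and ?M = "mprod (map (Dop H0 HI) ns)"
  have "(\<Sum>c\<in>?L. (?P a ** ?D nu ** ?P c) ** (?P c ** ?M ** ?P b)) = (\<Sum>c\<in>?L. ?P a ** ?D nu ** (?P c ** ?P c) ** ?M ** ?P b)"
    by (simp add: matrix_mul_assoc)
  also have "\<dots> = (\<Sum>c\<in>?L. ?P a ** ?D nu ** ?P c ** ?M ** ?P b)" by (simp add: spec_mult[OF herm])
  also have "\<dots> = ?P a ** ?D nu ** (\<Sum>c\<in>?L. ?P c) ** ?M ** ?P b" by (simp add: mm_sum_left mm_sum_right)
  also have "\<dots> = ?P a ** mprod (map ?D (nu # ns)) ** ?P b"
    by (simp add: spec_sum[OF herm] mprod_Cons matrix_mul_assoc)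
  finally have eq: "?P a ** mprod (map ?D (nu # ns)) ** ?P b = (\<Sum>c\<in>?L. (?P a ** ?D nu ** ?P c) ** (?P c ** ?M ** ?P b))"
    by simp
  have "(?P a ** ?D nu ** ?P c) ** (?P c ** ?M ** ?P b) = 0" if c: "c \<in> ?L" for c
  proof (cases "c - a = nu")
    case True
    then have "b - c \<noteq> sum_list ns" using Cons.prems by auto
    then have "?P c ** ?M ** ?P b = 0" using Cons.IH[OF c Cons.prems(2)] by simp
    then show ?thesis by simp
  next
    case False
    then show ?thesis using Dop_sandwich[OF herm Cons.prems(1) c] by simp
  qed
  then show ?case unfolding eq by (simp add: sum.neutral)
qed

lemma pinch_Dops:
  fixes H0 HI :: "complex^'n::finite^'n"
  assumes herm: "hermitian H0"
  shows "pinch H0 (mprod (map (Dop H0 HI) ns)) = (if sum_list ns = 0 then mprod (map (Dop H0 HI) ns) else 0)"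
proof -
  let ?P = "specproj H0" and ?L = "eigvals H0" and ?X = "mprod (map (Dop H0 HI) ns)"
  show ?thesis
  proof (cases "sum_list ns = 0")
    case False
    then have "?P a ** ?X ** ?P a = 0" if "a \<in> ?L" for a
      using prod_sandwich[OF herm that that] by simp
    then show ?thesis using False unfolding pinch_def by (simp add: sum.neutral)
  next
    case True
    have "?X = mat 1 ** ?X ** mat 1" by simp
    also have "\<dots> = (\<Sum>a\<in>?L. \<Sum>b\<in>?L. ?P a ** ?X ** ?P b)"
      unfolding spec_sum[OF herm, symmetric] by (simp add: mm_sum_left mm_sum_right) (rule sum.swap)
    also have "\<dots> = (\<Sum>a\<in>?L. \<Sum>b\<in>?L. if a = b then ?P a ** ?X ** ?P a else 0)"
    proof (intro sum.cong refl)
      fix a b assume "a \<in> ?L" "b \<in> ?L"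
      then show "?P a ** ?X ** ?P b = (if a = b then ?P a ** ?X ** ?P a else 0)"
        using prod_sandwich[OF herm, of a b ns] True by auto
    qed
    also have "\<dots> = pinch H0 ?X"
      unfolding pinch_def using finite_eigvals[OF herm] by simp
    finally show ?thesis using True by simp
  qed
qed

lemma pinch_lin:
  "pinch H (\<Sum>x\<in>S. c x *\<^sub>R M x) = (\<Sum>x\<in>S. c x *\<^sub>R pinch H (M x))"
  unfolding pinch_def
  by (simp add: mm_sum_left mm_sum_right mm_scaleR_left mm_scaleR_right scaleR_sum_right sum.swap[of _ S])

definition LZ :: "real set \<Rightarrow> nat \<Rightarrow> real list set" where
  "LZ B n = {ns \<in> LS B n. sum_list ns = 0}"

lemma finite_LS: "finite B \<Longrightarrow> finite (LS B n)"
  unfolding LS_def by (rule finite_lists_length_eq)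

lemma integrand:
  fixes H0 HI :: "complex^'n::finite^'n"
  assumes herm: "hermitian H0"
  shows "pinch H0 (mprod (map (HIt H0 HI) ts)) = (\<Sum>ns\<in>LZ (bohr H0) (length ts).
           exp (- (\<Sum>i<length ts. ns!i * ts!i)) *\<^sub>R mprod (map (Dop H0 HI) ns))"
  unfolding mprod_HIt[OF herm] pinch_lin pinch_Dops[OF herm] LZ_def
  using finite_LS[OF finite_bohr[OF herm]]
  by (simp add: sum.inter_filter if_distrib[of "\<lambda>x. _ *\<^sub>R x"] cong: if_cong)

(* ---- part C ---- *)
definition Ef :: "(nat \<Rightarrow> real) \<Rightarrow> real list \<Rightarrow> real" where
  "Ef a ts = exp (- (\<Sum>i<length ts. a i * ts!i))"

definition J :: "nat \<Rightarrow> real \<Rightarrow> (nat \<Rightarrow> real) \<Rightarrow> real" where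
  "J m b a = nested_int m b (Ef a)"

lemma nested_int_cong:
  "(\<And>ts. length ts = m \<Longrightarrow> f ts = g ts) \<Longrightarrow> nested_int m b f = nested_int m b g"
proof (induction m arbitrary: b f g)
  case 0 then show ?case by simp
next
  case (Suc m)
  have "nested_int m t (\<lambda>ts. f (t # ts)) = nested_int m t (\<lambda>ts. g (t # ts))" for t
    by (rule Suc.IH) (simp add: Suc.prems)
  then show ?case by simp
qed

lemma nested_int_scaleR:
  "nested_int m b (\<lambda>ts. c *\<^sub>R f ts) = c *\<^sub>R nested_int m b f"
proof (induction m arbitrary: b f)
  case 0 then show ?case by simp
next
  case (Suc m)
  then show ?case by simp
qed

lemma Ef_Nil[simp]: "Ef a [] = 1" unfolding Ef_def by simp

lemma Ef_Cons: "Ef a (t # ts) = exp (- (a 0 * t)) * Ef (\<lambda>i. a (Suc i)) ts"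
  unfolding Ef_def by (simp del: sum.lessThan_Suc add: sum.lessThan_Suc_shift exp_add[symmetric] exp_diff algebra_simps)

lemma J_0[simp]: "J 0 b a = 1" unfolding J_def by simp

lemma J_Suc: "J (Suc m) b a = integral {0..b} (\<lambda>t. exp (- (a 0 * t)) * J m t (\<lambda>i. a (Suc i)))"
proof -
  have "nested_int m t (\<lambda>ts. Ef a (t # ts)) = exp (- (a 0 * t)) * J m t (\<lambda>i. a (Suc i))" for t
    unfolding Ef_Cons J_def using nested_int_scaleR[of m t "exp (- (a 0 * t))" "Ef (\<lambda>i. a (Suc i))"]
    by simp
  then show ?thesis unfolding J_def by simp
qed

lemma J_cong: "(\<And>i. i < m \<Longrightarrow> a i = a' i) \<Longrightarrow> J m b a = J m b a'"
  unfolding J_def Ef_def by (rule nested_int_cong) simp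

lemma image_div_interval: "(b::real) > 0 \<Longrightarrow> (\<lambda>x. x / b) ` {0..b} = {0..1}"
proof safe
  fix x :: real assume "b > 0" "x \<in> {0..1}"
  then show "x \<in> (\<lambda>x. x / b) ` {0..b}"
    by (intro image_eqI[of _ _ "b * x"]) (auto simp: mult_le_cancel_left1)
qed auto

lemma J_cont: "continuous_on (UNIV \<times> {0..}) (\<lambda>p. J m (snd p) (fst p))"
proof (induction m)
  case 0 then show ?case by simp
next
  case (Suc m)
  define h where "h a t = exp (- (a 0 * t)) * J m t (\<lambda>i. a (Suc i))" for a :: "nat \<Rightarrow> real" and t
  have resc: "J (Suc m) b a = b * integral (cbox 0 1) (\<lambda>u. h a (b * u))" if "b \<ge> 0" for a b
  proof (cases "b = 0")
    case True
    then show ?thesis unfolding J_Suc by simp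
  next
    case False
    then have bpos: "b > 0" using that by simp
    have "integral ((\<lambda>x. x / b) ` {0..b}) (\<lambda>x. h a (b * x)) = (1 / \<bar>b\<bar>) *\<^sub>R integral {0..b} (h a)"
      using bpos by (intro integral_stretch_real) simp
    then have "integral (cbox 0 1) (\<lambda>u. h a (b * u)) = (1 / b) * J (Suc m) b a"
      using bpos unfolding J_Suc h_def by (simp add: image_div_interval cbox_interval)
    then show ?thesis using bpos by simp
  qed
  have c1: "continuous_on ((UNIV \<times> {0..}) \<times> cbox 0 1) (\<lambda>(p, u). h (fst p) (snd p * u))"
    unfolding case_prod_beta' h_def
  proof (intro continuous_intros)
    let ?S = "(UNIV \<times> {0..}) \<times> cbox (0::real) 1 :: (((nat \<Rightarrow> real) \<times> real) \<times> real) set"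
    have cf: "continuous_on ?S (\<lambda>x. fst (fst x))" by (intro continuous_intros)
    show "continuous_on ?S (\<lambda>x. fst (fst x) 0)"
      by (rule continuous_on_product_then_coordinatewise[OF cf])
    show "continuous_on ?S (\<lambda>x. J m (snd (fst x) * snd x) (\<lambda>i. fst (fst x) (Suc i)))"
    proof -
      let ?g = "\<lambda>x::((nat\<Rightarrow>real)\<times>real)\<times>real. ((\<lambda>i. fst (fst x) (Suc i)), snd (fst x) * snd x)"
      have g: "continuous_on ?S ?g"
        by (intro continuous_intros continuous_on_product_then_coordinatewise[OF cf])
      have im: "?g ` ?S \<subseteq> UNIV \<times> {0..}"
        by (auto simp: cbox_interval)
      have "continuous_on ?S ((\<lambda>p. J m (snd p) (fst p)) \<circ> ?g)"
        by (rule continuous_on_compose[OF g continuous_on_subset[OF Suc.IH im]])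
      then show ?thesis by (simp add: o_def)
    qed
  qed
  have "continuous_on (UNIV \<times> {0..}) (\<lambda>p. snd p * integral (cbox 0 1) (\<lambda>u. h (fst p) (snd p * u)))"
    by (intro continuous_intros integral_continuous_on_param c1)
  then show ?case
    by (rule continuous_on_eq) (auto simp: resc)
qed

lemma J_cont_t: "continuous_on {0..b} (\<lambda>t. J m t a)"
  by (rule continuous_on_compose2[OF J_cont, of _ "\<lambda>t. (a, t)", simplified]) (auto intro!: continuous_intros)

lemma nested_lin:
  fixes M :: "'x \<Rightarrow> 'v::euclidean_space"
  assumes "b \<ge> 0" and fin: "finite S"
  shows "nested_int k b (\<lambda>ts. \<Sum>x\<in>S. Ef (a x) ts *\<^sub>R M x) = (\<Sum>x\<in>S. J k b (a x) *\<^sub>R M x)"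
  using assms(1)
proof (induction k arbitrary: b a M)
  case 0 then show ?case by simp
next
  case (Suc k)
  define phi where "phi x t = exp (- (a x 0 * t)) * J k t (\<lambda>i. a x (Suc i))" for x t
  have cphi: "continuous_on {0..b} (phi x)" for x
    unfolding phi_def by (intro continuous_intros J_cont_t)
  have inner: "nested_int k t (\<lambda>ts. \<Sum>x\<in>S. Ef (a x) (t # ts) *\<^sub>R M x) = (\<Sum>x\<in>S. phi x t *\<^sub>R M x)"
    if "t \<in> {0..b}" for t
  proof -
    have "nested_int k t (\<lambda>ts. \<Sum>x\<in>S. Ef (a x) (t # ts) *\<^sub>R M x)
        = nested_int k t (\<lambda>ts. \<Sum>x\<in>S. Ef (\<lambda>i. a x (Suc i)) ts *\<^sub>R (exp (- (a x 0 * t)) *\<^sub>R M x))"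
      by (simp add: Ef_Cons mult.commute)
    also have "\<dots> = (\<Sum>x\<in>S. J k t (\<lambda>i. a x (Suc i)) *\<^sub>R (exp (- (a x 0 * t)) *\<^sub>R M x))"
      using that by (intro Suc.IH) simp
    finally show ?thesis by (simp add: phi_def mult.commute)
  qed
  have "nested_int (Suc k) b (\<lambda>ts. \<Sum>x\<in>S. Ef (a x) ts *\<^sub>R M x) = integral {0..b} (\<lambda>t. \<Sum>x\<in>S. phi x t *\<^sub>R M x)"
    by (simp only: nested_int.simps) (rule integral_cong, rule inner)
  also have "\<dots> = (\<Sum>x\<in>S. integral {0..b} (\<lambda>t. phi x t *\<^sub>R M x))"
    by (intro integral_sum fin integrable_continuous_interval continuous_intros cphi)
  also have "\<dots> = (\<Sum>x\<in>S. integral {0..b} (phi x) *\<^sub>R M x)"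
  proof (intro sum.cong refl)
    fix x
    have "(phi x has_integral integral {0..b} (phi x)) {0..b}"
      by (intro integrable_integral integrable_continuous_interval cphi)
    then show "integral {0..b} (\<lambda>t. phi x t *\<^sub>R M x) = integral {0..b} (phi x) *\<^sub>R M x"
      by (intro integral_unique has_integral_scaleR_left)
  qed
  also have "\<dots> = (\<Sum>x\<in>S. J (Suc k) b (a x) *\<^sub>R M x)"
    unfolding J_Suc phi_def by simp
  finally show ?case .
qed

(* ---- part D ---- *)
lemma int_exp:
  fixes b c :: real
  assumes b: "b \<ge> 0"
  shows "integral {0..b} (\<lambda>t. exp (- (c * t))) = (if c = 0 then b else (1 - exp (- (c * b))) / c)"
proof (cases "c = 0")
  case True
  have "integral {0..b} (\<lambda>t. 1::real) = b" using b by (simp add: integral_const_real)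
  then show ?thesis using True by simp
next
  case False
  have "((\<lambda>t. exp (- (c * t))) has_integral ((- exp (- (c * b)) / c) - (- exp (- (c * 0)) / c))) {0..b}"
  proof (rule fundamental_theorem_of_calculus[OF b])
    fix t assume "t \<in> {0..b}"
    have "((\<lambda>t. - exp (- (c * t)) / c) has_real_derivative exp (- (c * t))) (at t within {0..b})"
      using False by (auto intro!: derivative_eq_intros simp: field_simps)
    then show "((\<lambda>t. - exp (- (c * t)) / c) has_vector_derivative exp (- (c * t))) (at t within {0..b})"
      by (simp add: has_real_derivative_iff_has_vector_derivative)
  qed
  then have "integral {0..b} (\<lambda>t. exp (- (c * t))) = (- exp (- (c * b)) / c) - (- exp (- (c * 0)) / c)"
    by (rule integral_unique)
  then show ?thesis using False by (simp add: diff_divide_distrib)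
qed

definition sg :: "(nat \<Rightarrow> real) \<Rightarrow> nat \<Rightarrow> real" where
  "sg a j = (\<Sum>i<j. a i)"

lemma sg_0[simp]: "sg a 0 = 0" unfolding sg_def by simp

lemma sg_shift: "sg a (Suc j) = a 0 + sg (\<lambda>i. a (Suc i)) j"
  unfolding sg_def by (rule sum.lessThan_Suc_shift)

definition CF :: "nat \<Rightarrow> real \<Rightarrow> (nat \<Rightarrow> real) \<Rightarrow> real" where
  "CF m b a = (\<Sum>j\<in>{0..m}. exp (- (b * sg a j)) / (\<Prod>i\<in>{0..m} - {j}. (sg a i - sg a j)))"

lemma J_step_gen:
  assumes IH: "\<And>t a'. t \<ge> 0 \<Longrightarrow> inj_on (sg a') {0..m} \<Longrightarrow> J m t a' = CF m t a'"
    and b: "b \<ge> 0" and inj: "inj_on (\<lambda>j. sg a (Suc j)) {0..m}"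
  shows "J (Suc m) b a = (\<Sum>j\<in>{0..m}. integral {0..b} (\<lambda>t. exp (- (sg a (Suc j) * t))) /
            (\<Prod>i\<in>{0..m} - {j}. (sg a (Suc i) - sg a (Suc j))))"
proof -
  let ?a' = "\<lambda>i. a (Suc i)"
  have sga: "sg ?a' j = sg a (Suc j) - a 0" for j by (simp add: sg_shift)
  have inj': "inj_on (sg ?a') {0..m}" using inj unfolding sga inj_on_def by auto
  define P where "P j = (\<Prod>i\<in>{0..m} - {j}. (sg a (Suc i) - sg a (Suc j)))" for j
  have Pj: "(\<Prod>i\<in>{0..m} - {j}. (sg ?a' i - sg ?a' j)) = P j" for j unfolding P_def sga by simp
  have "J (Suc m) b a = integral {0..b} (\<lambda>t. exp (- (a 0 * t)) * J m t ?a')" by (rule J_Suc)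
  also have "\<dots> = integral {0..b} (\<lambda>t. \<Sum>j\<in>{0..m}. exp (- (sg a (Suc j) * t)) / P j)"
  proof (rule integral_cong)
    fix t assume "t \<in> {0..b}"
    then have "J m t ?a' = CF m t ?a'" using IH inj' by simp
    then have "exp (- (a 0 * t)) * J m t ?a' = (\<Sum>j\<in>{0..m}. exp (- (a 0 * t)) * (exp (- (t * sg ?a' j)) / P j))"
      by (simp add: CF_def Pj sum_distrib_left)
    also have "\<dots> = (\<Sum>j\<in>{0..m}. exp (- (sg a (Suc j) * t)) / P j)"
    proof (rule sum.cong[OF refl])
      fix j
      have "exp (- (a 0 * t)) * exp (- (t * sg ?a' j)) = exp (- (sg a (Suc j) * t))"
        unfolding sg_shift[of a j] by (simp add: exp_add[symmetric] algebra_simps)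
      then show "exp (- (a 0 * t)) * (exp (- (t * sg ?a' j)) / P j) = exp (- (sg a (Suc j) * t)) / P j"
        by (simp add: times_divide_eq_right)
    qed
    finally show "exp (- (a 0 * t)) * J m t ?a' = (\<Sum>j\<in>{0..m}. exp (- (sg a (Suc j) * t)) / P j)" .
  qed
  also have "\<dots> = (\<Sum>j\<in>{0..m}. integral {0..b} (\<lambda>t. exp (- (sg a (Suc j) * t)) / P j))"
  proof (rule integral_sum)
    fix j
    have "continuous_on {0..b} (\<lambda>t. exp (- (sg a (Suc j) * t)) * inverse (P j))"
      by (intro continuous_intros)
    then show "(\<lambda>t. exp (- (sg a (Suc j) * t)) / P j) integrable_on {0..b}"
      by (simp add: divide_inverse integrable_continuous_interval)
  qed simp
  also have "\<dots> = (\<Sum>j\<in>{0..m}. integral {0..b} (\<lambda>t. exp (- (sg a (Suc j) * t))) / P j)"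
    by (simp add: integral_divide)
  finally show ?thesis unfolding P_def .
qed

lemma prod_split_Suc:
  assumes "j \<le> m"
  shows "(\<Prod>i\<in>{0..Suc m} - {Suc j}. (f i - f (Suc j)::real)) =
         (f 0 - f (Suc j)) * (\<Prod>i\<in>{0..m} - {j}. (f (Suc i) - f (Suc j)))"
proof -
  have e: "{0..Suc m} - {Suc j} = insert 0 (Suc ` ({0..m} - {j}))"
  proof (intro set_eqI iffI)
    fix i assume "i \<in> {0..Suc m} - {Suc j}"
    then show "i \<in> insert 0 (Suc ` ({0..m} - {j}))"
      by (cases i) auto
  qed auto
  have "0 \<notin> Suc ` ({0..m} - {j})" by auto
  then show ?thesis unfolding e by (simp add: prod.reindex)
qed

lemma J_CF: "b \<ge> 0 \<Longrightarrow> inj_on (sg a) {0..m} \<Longrightarrow> J m b a = CF m b a"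
proof (induction m arbitrary: a b)
  case 0 then show ?case by (simp add: CF_def)
next
  case (Suc m)
  have inj1: "inj_on (\<lambda>j. sg a (Suc j)) {0..m}"
  proof (rule inj_onI)
    fix x y assume "x \<in> {0..m}" "y \<in> {0..m}" "sg a (Suc x) = sg a (Suc y)"
    then have "Suc x = Suc y" by (intro inj_onD[OF Suc.prems(2)]) auto
    then show "x = y" by simp
  qed
  have nz: "sg a (Suc j) \<noteq> 0" if "j \<le> m" for j
  proof
    assume "sg a (Suc j) = 0"
    then have "sg a (Suc j) = sg a 0" by simp
    then show False using Suc.prems(2) that unfolding inj_on_def by (metis Zero_not_Suc atLeastAtMost_iff le0 Suc_le_mono)
  qed
  define s where "s j = sg a (Suc j)" for j
  define P' where "P' j = (\<Prod>i\<in>{0..m} - {j}. (sg a (Suc i) - sg a (Suc j)))" for j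
  define P where "P j = (\<Prod>i\<in>{0..Suc m} - {j}. (sg a i - sg a j))" for j
  have P'nz: "P' j \<noteq> 0" if "j \<le> m" for j
    unfolding P'_def
  proof (rule prod_diff_nz[of "{0..m}" "\<lambda>i. sg a (Suc i)" j])
    show "inj_on (\<lambda>i. sg a (Suc i)) (insert j {0..m})" using inj1 that by (simp add: insert_absorb)
  qed simp
  have PS: "P (Suc j) = - s j * P' j" if "j \<le> m" for j
    unfolding P_def P'_def s_def using prod_split_Suc[OF that, of "sg a"] by simp
  have J: "J (Suc m) b a = (\<Sum>j\<in>{0..m}. ((1 - exp (- (s j * b))) / s j) / P' j)"
  proof -
    have "J (Suc m) b a = (\<Sum>j\<in>{0..m}. integral {0..b} (\<lambda>t. exp (- (sg a (Suc j) * t))) /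
            (\<Prod>i\<in>{0..m} - {j}. (sg a (Suc i) - sg a (Suc j))))"
      by (rule J_step_gen[OF Suc.IH Suc.prems(1) inj1])
    also have "\<dots> = (\<Sum>j\<in>{0..m}. ((1 - exp (- (s j * b))) / s j) / P' j)"
      unfolding int_exp[OF Suc.prems(1)] P'_def s_def
      using nz by (intro sum.cong refl) simp
    finally show ?thesis .
  qed
  have "dd (\<lambda>_. 1) (sg a) {0..Suc m} = 0"
    by (rule dd_const) (use Suc.prems(2) in auto)
  then have "(\<Sum>j\<in>{0..Suc m}. 1 / P j) = 0" unfolding dd_def P_def by simp
  then have id: "1 / P 0 = - (\<Sum>j\<in>{0..m}. 1 / P (Suc j))"
    unfolding sum.atLeast0_atMost_Suc_shift by (simp add: o_def eq_neg_iff_add_eq_0)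
  have "CF (Suc m) b a = 1 / P 0 + (\<Sum>j\<in>{0..m}. exp (- (b * s j)) / P (Suc j))"
    unfolding CF_def sum.atLeast0_atMost_Suc_shift P_def s_def by (simp add: o_def)
  also have "\<dots> = (\<Sum>j\<in>{0..m}. (exp (- (b * s j)) - 1) / P (Suc j))"
    unfolding id by (simp add: diff_divide_distrib sum_subtractf)
  also have "\<dots> = (\<Sum>j\<in>{0..m}. ((1 - exp (- (s j * b))) / s j) / P' j)"
  proof (intro sum.cong refl)
    fix j assume "j \<in> {0..m}"
    then have "j \<le> m" by simp
    then show "(exp (- (b * s j)) - 1) / P (Suc j) = ((1 - exp (- (s j * b))) / s j) / P' j"
      unfolding PS[OF \<open>j \<le> m\<close>] using nz[of j] P'nz[of j] unfolding s_def
      by (simp add: field_simps)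
  qed
  finally show ?case using J by simp
qed

(* ---- part E ---- *)
definition ss :: "(nat \<Rightarrow> real) \<Rightarrow> nat \<Rightarrow> real" where
  "ss w l = (\<Sum>j=1..l. w j)"

definition nuf :: "nat \<Rightarrow> (nat \<Rightarrow> real) \<Rightarrow> nat \<Rightarrow> real" where
  "nuf m w i = (if i < m then w (Suc i) else - (\<Sum>j=1..m. w j))"

definition QQ :: "nat \<Rightarrow> (nat \<Rightarrow> real) \<Rightarrow> nat \<Rightarrow> real" where
  "QQ m w p = (\<Prod>q\<in>{1..m} - {p}. (ss w q - ss w p))"

lemma sum_split_ivl:
  assumes "k \<le> p"
  shows "(\<Sum>j=1..p. f j) = (\<Sum>j=1..k. (f j::real)) + (\<Sum>j=Suc k..p. f j)"
  using sum.atLeastLessThan_concat[of 1 "Suc k" "Suc p" f] assms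
  by (simp add: atLeastLessThanSuc_atLeastAtMost)

lemma sum_mid: "k \<le> p \<Longrightarrow> (\<Sum>j=Suc k..p. w j) = ss w p - ss w k"
  unfolding ss_def using sum_split_ivl[of k p w] by simp

lemma ss_Suc_shift: "(\<Sum>i<n. w (Suc i)) = ss w n"
  unfolding ss_def by (induction n) (simp_all add: sum.cl_ivl_Suc)

lemma nondeg_ss:
  assumes "w \<in> nondeg (Suc m)"
  shows "\<And>p. 1 \<le> p \<Longrightarrow> p \<le> m \<Longrightarrow> ss w p \<noteq> 0"
    and "\<And>p q. q < p \<Longrightarrow> p \<le> m \<Longrightarrow> ss w p \<noteq> ss w q"
proof -
  fix p assume "1 \<le> p" "p \<le> m"
  then show "ss w p \<noteq> 0" using assms unfolding nondeg_def ss_def by auto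
next
  fix p q assume qp: "q < p" "p \<le> m"
  then have "(\<Sum>j=Suc q..p. w j) \<noteq> 0" using assms unfolding nondeg_def by auto
  then show "ss w p \<noteq> ss w q" using sum_mid[of q p w] qp by simp
qed

lemma sg_nuf: "j \<le> m \<Longrightarrow> sg (nuf m w) (Suc j) = (if j < m then ss w (Suc j) else 0)"
proof -
  assume j: "j \<le> m"
  show ?thesis
  proof (cases "j < m")
    case True
    have "sg (nuf m w) (Suc j) = (\<Sum>i<Suc j. w (Suc i))"
      unfolding sg_def nuf_def using True by (intro sum.cong) auto
    then show ?thesis using True by (simp add: ss_Suc_shift)
  next
    case False
    then have jm: "j = m" using j by simp
    have "sg (nuf m w) (Suc j) = (\<Sum>i<m. w (Suc i)) + (- (\<Sum>j=1..m. w j))"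
      unfolding sg_def jm by (simp add: nuf_def)
    then show ?thesis using False by (simp add: ss_Suc_shift ss_def)
  qed
qed

lemma alg_sgn:
  fixes c e P1 s2 B :: real
  assumes "c * c = 1"
  shows "(- c) * e / ((c * P1) * s2 * B) = - (e / (s2 * (P1 * B)))"
proof -
  have c: "c \<noteq> 0" using assms by auto
  have "(- c) * e / ((c * P1) * s2 * B) = - ((c * e) / (c * (s2 * (P1 * B))))"
    by (simp add: mult_ac)
  also have "\<dots> = - (e / (s2 * (P1 * B)))" using c by simp
  finally show ?thesis .
qed

lemma gexpr_alt:
  "gexpr (Suc m) \<beta> w = (1 / (\<Prod>l=1..m. ss w l)) * (\<beta> - (\<Sum>l=1..m. 1 / ss w l))
     + (\<Sum>p=1..m. exp (- \<beta> * ss w p) / ((ss w p)\<^sup>2 * QQ m w p))"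
proof -
  have trm: "(-1) ^ p * exp (- \<beta> * ss w p) /
           ((\<Prod>m'=2..p. \<Sum>i=m'..p. w i) * (ss w p)\<^sup>2 * (\<Prod>l=p+1..m. \<Sum>j=p+1..l. w j))
        = - (exp (- \<beta> * ss w p) / ((ss w p)\<^sup>2 * QQ m w p))" if p: "p \<in> {1..m}" for p
  proof -
    have p1: "1 \<le> p" "p \<le> m" using p by auto
    have A: "(\<Prod>m'=2..p. \<Sum>i=m'..p. w i) = (\<Prod>q=1..p-1. (ss w p - ss w q))"
    proof -
      have e: "Suc 1 = (2::nat)" "Suc (p - 1) = p" using p1 by auto
      have "(\<Prod>m'=2..p. \<Sum>i=m'..p. w i) = (\<Prod>m'=Suc 1..Suc (p-1). \<Sum>i=m'..p. w i)"
        by (simp only: e)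
      also have "\<dots> = (\<Prod>q=1..p-1. \<Sum>i=Suc q..p. w i)"
        by (rule prod.shift_bounds_cl_Suc_ivl)
      finally have "(\<Prod>m'=2..p. \<Sum>i=m'..p. w i) = (\<Prod>q=1..p-1. \<Sum>i=Suc q..p. w i)" .
      also have "\<dots> = (\<Prod>q=1..p-1. (ss w p - ss w q))"
        by (intro prod.cong refl sum_mid) auto
      finally show ?thesis .
    qed
    have A2: "(\<Prod>q=1..p-1. (ss w p - ss w q)) = (-1) ^ (p - 1) * (\<Prod>q=1..p-1. (ss w q - ss w p))"
      using prod_uminus[of "\<lambda>q. ss w q - ss w p" "{1..p-1}"] by simp
    have B: "(\<Prod>l=p+1..m. \<Sum>j=p+1..l. w j) = (\<Prod>l=p+1..m. (ss w l - ss w p))"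
      by (intro prod.cong refl) (simp add: sum_mid)
    have Q: "QQ m w p = (\<Prod>q=1..p-1. (ss w q - ss w p)) * (\<Prod>l=p+1..m. (ss w l - ss w p))"
    proof -
      have "{1..m} - {p} = {1..p-1} \<union> {p+1..m}" using p1 by auto
      then show ?thesis unfolding QQ_def by (simp add: prod.union_disjoint)
    qed
    have sgn: "(-1::real) ^ p = - ((-1) ^ (p - 1))" using p1
      by (metis Suc_diff_1 less_le_trans mult_minus1 power_Suc zero_less_one)
    have sq: "((-1::real) ^ (p - 1)) * ((-1) ^ (p - 1)) = 1"
      by (simp add: power_mult_distrib[symmetric])
    show ?thesis unfolding A A2 B Q sgn by (rule alg_sgn[OF sq])
  qed
  have g: "gexpr (Suc m) \<beta> w = (1 / (\<Prod>l=1..m. ss w l)) * (\<beta> - (\<Sum>l=1..m. 1 / ss w l))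
     - (\<Sum>p=1..m. (-1) ^ p * exp (- \<beta> * ss w p) /
           ((\<Prod>m'=2..p. \<Sum>i=m'..p. w i) * (ss w p)\<^sup>2 * (\<Prod>l=p+1..m. \<Sum>j=p+1..l. w j)))"
    unfolding gexpr_def Let_def ss_def by simp
  have "(\<Sum>p=1..m. (-1) ^ p * exp (- \<beta> * ss w p) /
           ((\<Prod>m'=2..p. \<Sum>i=m'..p. w i) * (ss w p)\<^sup>2 * (\<Prod>l=p+1..m. \<Sum>j=p+1..l. w j)))
        = (\<Sum>p=1..m. - (exp (- \<beta> * ss w p) / ((ss w p)\<^sup>2 * QQ m w p)))"
    by (rule sum.cong[OF refl trm])
  then show ?thesis unfolding g by (simp add: sum_negf)
qed


lemma inj_ss:
  assumes nd: "w \<in> nondeg (Suc m)"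
  shows "inj_on (ss w) {1..m}"
proof (rule inj_onI)
  fix x y assume x: "x \<in> {1..m}" and y: "y \<in> {1..m}" and e: "ss w x = ss w y"
  show "x = y"
  proof (rule linorder_cases[of x y])
    assume "x < y"
    have "ss w y \<noteq> ss w x" by (rule nondeg_ss(2)[OF nd]) (use \<open>x < y\<close> y in auto)
    then show ?thesis using e by simp
  next
    assume "y < x"
    have "ss w x \<noteq> ss w y" by (rule nondeg_ss(2)[OF nd]) (use \<open>y < x\<close> x in auto)
    then show ?thesis using e by simp
  qed
qed

lemma QQ_nz:
  assumes nd: "w \<in> nondeg (Suc m)" and p: "p \<in> {1..m}"
  shows "QQ m w p \<noteq> 0"
  unfolding QQ_def
  by (rule prod_diff_nz) (use inj_ss[OF nd] p in \<open>auto simp: insert_absorb\<close>)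

lemma J_gexpr:
  assumes nd: "w \<in> nondeg (Suc m)" and b: "\<beta> \<ge> 0"
  shows "J (Suc m) \<beta> (nuf m w) = gexpr (Suc m) \<beta> w"
proof -
  let ?a = "nuf m w"
  define s where "s j = sg ?a (Suc j)" for j
  have s_lt: "s j = ss w (Suc j)" if "j < m" for j using sg_nuf[of j m w] that unfolding s_def by simp
  have s_m: "s m = 0" using sg_nuf[of m m w] unfolding s_def by simp
  have ssnz: "ss w p \<noteq> 0" if "p \<in> {1..m}" for p using nondeg_ss(1)[OF nd] that by auto
  have inj1: "inj_on s {0..m}"
  proof (rule inj_onI)
    fix x y assume x: "x \<in> {0..m}" and y: "y \<in> {0..m}" and e: "s x = s y"
    have v: "s z = (if z < m then ss w (Suc z) else 0)" if "z \<in> {0..m}" for z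
      using that s_lt s_m by (cases "z < m") auto
    have nz: "z < m \<Longrightarrow> ss w (Suc z) \<noteq> 0" for z using ssnz[of "Suc z"] by simp
    have i: "inj_on (ss w) {1..m}" by (rule inj_ss[OF nd])
    show "x = y"
      using e v[OF x] v[OF y] nz x y inj_onD[OF i, of "Suc x" "Suc y"]
      by (auto split: if_splits)
  qed
  have J1: "J (Suc m) \<beta> ?a = (\<Sum>j\<in>{0..m}. integral {0..\<beta>} (\<lambda>t. exp (- (s j * t))) / (\<Prod>i\<in>{0..m} - {j}. (s i - s j)))"
    unfolding s_def by (rule J_step_gen[OF J_CF b inj1[unfolded s_def]])
  define PP where "PP = (\<Prod>l=1..m. ss w l)"
  have e1: "{0..m} = insert m {0..<m}" by auto
  have e2: "{0..m} - {m} = {0..<m}" by auto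
  have e3: "{1..m} = Suc ` {0..<m}" by (auto simp: image_iff intro!: bexI[of _ "x - 1" for x])
  have termm: "integral {0..\<beta>} (\<lambda>t. exp (- (s m * t))) / (\<Prod>i\<in>{0..m} - {m}. (s i - s m)) = \<beta> / PP"
  proof -
    have "(\<Prod>i\<in>{0..m} - {m}. (s i - s m)) = (\<Prod>i\<in>{0..<m}. ss w (Suc i))"
      unfolding e2 s_m by (intro prod.cong refl) (simp add: s_lt)
    also have "\<dots> = PP" unfolding PP_def e3 by (subst prod.reindex) (auto simp: o_def)
    finally show ?thesis using int_exp[OF b, of 0] s_m by simp
  qed
  have termj: "integral {0..\<beta>} (\<lambda>t. exp (- (s j * t))) / (\<Prod>i\<in>{0..m} - {j}. (s i - s j))
      = ((1 - exp (- (ss w (Suc j) * \<beta>))) / ss w (Suc j)) / (- ss w (Suc j) * QQ m w (Suc j))" if j: "j < m" for j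
  proof -
    have sj: "s j = ss w (Suc j)" by (rule s_lt[OF j])
    have nz: "ss w (Suc j) \<noteq> 0" using ssnz[of "Suc j"] j by simp
    have e4: "{0..m} - {j} = insert m ({0..<m} - {j})" using j by auto
    have e5: "{1..m} - {Suc j} = Suc ` ({0..<m} - {j})"
    proof (intro set_eqI iffI)
      fix x assume "x \<in> {1..m} - {Suc j}" then show "x \<in> Suc ` ({0..<m} - {j})" by (cases x) auto
    qed auto
    have "(\<Prod>i\<in>{0..m} - {j}. (s i - s j)) = (s m - s j) * (\<Prod>i\<in>{0..<m} - {j}. (s i - s j))"
      unfolding e4 by simp
    also have "(\<Prod>i\<in>{0..<m} - {j}. (s i - s j)) = QQ m w (Suc j)"
      unfolding QQ_def e5 by (subst prod.reindex) (auto simp: o_def sj s_lt intro!: prod.cong)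
    finally have "(\<Prod>i\<in>{0..m} - {j}. (s i - s j)) = - ss w (Suc j) * QQ m w (Suc j)"
      using s_m sj by simp
    then show ?thesis using int_exp[OF b, of "s j"] sj nz by simp
  qed
  have J2: "J (Suc m) \<beta> ?a = \<beta> / PP + (\<Sum>p=1..m. ((1 - exp (- (ss w p * \<beta>))) / ss w p) / (- ss w p * QQ m w p))"
  proof -
    define F where "F j = integral {0..\<beta>} (\<lambda>t. exp (- (s j * t))) / (\<Prod>i\<in>{0..m} - {j}. (s i - s j))" for j
    have "J (Suc m) \<beta> ?a = F m + (\<Sum>j\<in>{0..<m}. F j)"
      unfolding J1 e1 F_def by (subst sum.insert) auto
    also have "F m = \<beta> / PP" unfolding F_def by (rule termm)
    also have "(\<Sum>j\<in>{0..<m}. F j) = (\<Sum>j\<in>{0..<m}. ((1 - exp (- (ss w (Suc j) * \<beta>))) / ss w (Suc j)) / (- ss w (Suc j) * QQ m w (Suc j)))"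
      unfolding F_def by (rule sum.cong[OF refl termj]) simp
    finally have "J (Suc m) \<beta> ?a = \<beta> / PP + (\<Sum>j\<in>{0..<m}. ((1 - exp (- (ss w (Suc j) * \<beta>))) / ss w (Suc j)) / (- ss w (Suc j) * QQ m w (Suc j)))" .
    moreover have "(\<Sum>j\<in>{0..<m}. ((1 - exp (- (ss w (Suc j) * \<beta>))) / ss w (Suc j)) / (- ss w (Suc j) * QQ m w (Suc j)))
        = (\<Sum>p=1..m. ((1 - exp (- (ss w p * \<beta>))) / ss w p) / (- ss w p * QQ m w p))"
      unfolding e3 by (subst sum.reindex) (auto simp: o_def)
    ultimately show ?thesis by simp
  qed
  have tw: "((1 - exp (- (ss w p * \<beta>))) / ss w p) / (- ss w p * QQ m w p)
      = exp (- \<beta> * ss w p) / ((ss w p)\<^sup>2 * QQ m w p) - (1 / (ss w p)^2) / QQ m w p" if p: "p \<in> {1..m}" for p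
    using ssnz[OF p] QQ_nz[OF nd p] by (simp add: field_simps power2_eq_square)
  have idt: "(\<Sum>p=1..m. (1 / (ss w p)^2) / QQ m w p) = (1 / PP) * (\<Sum>l=1..m. 1 / ss w l)"
  proof (cases "m = 0")
    case True then show ?thesis by simp
  next
    case False
    have "dd (\<lambda>y. 1 / y^2) (ss w) {1..m} = (1 / (\<Prod>j\<in>{1..m}. ss w j)) * (\<Sum>j\<in>{1..m}. 1 / ss w j)"
      by (rule dd_invsq) (use False inj_ss[OF nd] ssnz in auto)
    then show ?thesis unfolding dd_def QQ_def PP_def by simp
  qed
  have "J (Suc m) \<beta> ?a = \<beta> / PP + (\<Sum>p=1..m. exp (- \<beta> * ss w p) / ((ss w p)\<^sup>2 * QQ m w p))
      - (\<Sum>p=1..m. (1 / (ss w p)^2) / QQ m w p)"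
  proof -
    have "(\<Sum>p=1..m. ((1 - exp (- (ss w p * \<beta>))) / ss w p) / (- ss w p * QQ m w p))
        = (\<Sum>p=1..m. exp (- \<beta> * ss w p) / ((ss w p)\<^sup>2 * QQ m w p) - (1 / (ss w p)^2) / QQ m w p)"
      by (rule sum.cong[OF refl tw])
    also have "\<dots> = (\<Sum>p=1..m. exp (- \<beta> * ss w p) / ((ss w p)\<^sup>2 * QQ m w p)) - (\<Sum>p=1..m. (1 / (ss w p)^2) / QQ m w p)"
      by (rule sum_subtractf)
    finally show ?thesis unfolding J2 by simp
  qed
  also have "\<dots> = gexpr (Suc m) \<beta> w"
    unfolding gexpr_alt idt PP_def[symmetric] by (simp add: algebra_simps)
  finally show ?thesis .
qed

(* ---- part F ---- *)
lemma cont_nuf: "continuous_on UNIV (nuf m)"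
proof (rule continuous_on_coordinatewise_then_product)
  fix i
  show "continuous_on UNIV (\<lambda>w. nuf m w i)"
    by (cases "i < m") (auto simp: nuf_def intro!: continuous_intros)
qed

lemma cont_G:
  assumes b: "\<beta> \<ge> 0"
  shows "continuous_on UNIV (\<lambda>w. J (Suc m) \<beta> (nuf m w))"
proof -
  have g: "continuous_on UNIV (\<lambda>w. (nuf m w, \<beta>))" by (intro continuous_intros cont_nuf)
  have im: "(\<lambda>w. (nuf m w, \<beta>)) ` UNIV \<subseteq> UNIV \<times> {0..}" using b by auto
  have "continuous_on UNIV ((\<lambda>p. J (Suc m) (snd p) (fst p)) \<circ> (\<lambda>w. (nuf m w, \<beta>)))"
    by (rule continuous_on_compose[OF g continuous_on_subset[OF J_cont im]])
  then show ?thesis by (simp add: o_def)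
qed

lemma islimpt_nondeg: "w islimpt nondeg (Suc m)"
proof -
  define Bad where "Bad = (\<lambda>p. - (\<Sum>j=fst p..snd p. w j) / real (snd p + 1 - fst p)) ` ({1..m} \<times> {1..m})"
  have finB: "finite Bad" unfolding Bad_def by simp
  have "\<exists>c. c \<in> {0<..<inverse (real (Suc n))} \<and> c \<notin> Bad" for n
  proof -
    have "infinite ({0<..<inverse (real (Suc n))} - Bad)"
      by (rule Diff_infinite_finite[OF finB infinite_Ioo]) simp
    then have "{0<..<inverse (real (Suc n))} - Bad \<noteq> {}" by (metis finite.emptyI)
    then show ?thesis by blast
  qed
  then obtain c where c: "\<And>n. c n \<in> {0<..<inverse (real (Suc n))}" "\<And>n. c n \<notin> Bad" by metis
  define y where "y n = (\<lambda>i. w i + c n)" for n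
  have yS: "y n \<in> nondeg (Suc m) - {w}" for n
  proof
    show "y n \<in> nondeg (Suc m)"
      unfolding nondeg_def
    proof (clarify)
      fix a l assume al: "1 \<le> a" "a \<le> l" "l \<le> Suc m - 1" and z: "(\<Sum>j=a..l. y n j) = 0"
      have "(\<Sum>j=a..l. y n j) = (\<Sum>j=a..l. w j) + real (l + 1 - a) * c n"
        unfolding y_def by (simp add: sum.distrib)
      then have "c n = - (\<Sum>j=a..l. w j) / real (l + 1 - a)" using z al by (simp add: field_simps)
      moreover have "(a, l) \<in> {1..m} \<times> {1..m}" using al by auto
      ultimately have "c n \<in> Bad" unfolding Bad_def by (auto intro!: image_eqI[of _ _ "(a, l)"])
      then show False using c(2) by blast
    qed
    show "y n \<notin> {w}"
    proof
      assume "y n \<in> {w}"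
      then have "y n 0 = w 0" by simp
      then show False using c(1)[of n] unfolding y_def by simp
    qed
  qed
  have c0: "c \<longlonglongrightarrow> 0"
  proof (rule tendsto_sandwich[of "\<lambda>_. 0" c sequentially "\<lambda>n. inverse (real (Suc n))"])
    have "0 \<le> c n \<and> c n \<le> inverse (real (Suc n))" for n using c(1)[of n] by simp
    then show "\<forall>\<^sub>F n in sequentially. 0 \<le> c n" "\<forall>\<^sub>F n in sequentially. c n \<le> inverse (real (Suc n))"
      by (auto intro!: always_eventually)
    show "(\<lambda>n. inverse (real (Suc n))) \<longlonglongrightarrow> 0" by (rule LIMSEQ_inverse_real_of_nat)
  qed simp
  have phi: "continuous_on UNIV (\<lambda>r::real. (\<lambda>i. w i + r))"
    by (intro continuous_on_coordinatewise_then_product continuous_intros)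
  have "(\<lambda>n. (\<lambda>i. w i + c n)) \<longlonglongrightarrow> (\<lambda>i. w i + 0)"
    by (rule continuous_on_tendsto_compose[OF phi c0]) auto
  then have "y \<longlonglongrightarrow> w" unfolding y_def by simp
  then show ?thesis using yS islimpt_sequential by blast
qed

lemma gk_J:
  assumes b: "\<beta> \<ge> 0"
  shows "gk (Suc m) \<beta> w = J (Suc m) \<beta> (nuf m w)"
proof (cases "w \<in> nondeg (Suc m)")
  case True
  then show ?thesis unfolding gk_def using J_gexpr[OF True b] by simp
next
  case False
  let ?G = "\<lambda>w. J (Suc m) \<beta> (nuf m w)"
  have "(?G \<longlongrightarrow> ?G w) (at w)"
    using cont_G[OF b] unfolding continuous_on_def by simp
  then have t1: "(?G \<longlongrightarrow> ?G w) (at w within nondeg (Suc m))"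
    by (rule tendsto_within_subset) simp
  have ev: "\<forall>\<^sub>F x in at w within nondeg (Suc m). ?G x = gexpr (Suc m) \<beta> x"
    unfolding eventually_at_filter by (auto intro!: always_eventually J_gexpr b)
  have t2: "(gexpr (Suc m) \<beta> \<longlongrightarrow> ?G w) (at w within nondeg (Suc m))"
    using t1 tendsto_cong[OF ev] by simp
  have nt: "\<not> trivial_limit (at w within nondeg (Suc m))"
    using islimpt_nondeg trivial_limit_within by blast
  show ?thesis unfolding gk_def using False tendsto_Lim[OF nt t2] by simp
qed

(* ---- part G ---- *)
definition lst :: "nat \<Rightarrow> (nat \<Rightarrow> real) \<Rightarrow> real list" where
  "lst m w = map (nuf m w) [0..<Suc m]"

lemma lst_nth: "i < Suc m \<Longrightarrow> lst m w ! i = nuf m w i"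
  unfolding lst_def by (simp del: upt_Suc)

lemma lst_len[simp]: "length (lst m w) = Suc m"
  unfolding lst_def by simp

lemma lst_sum: "sum_list (lst m w) = 0"
proof -
  have "sum_list (lst m w) = (\<Sum>i\<in>{0..<Suc m}. nuf m w i)"
    unfolding lst_def sum_set_upt_conv_sum_list_nat[symmetric] by simp
  also have "\<dots> = (\<Sum>i<m. w (Suc i)) + (- (\<Sum>j=1..m. w j))"
    by (simp add: lessThan_atLeast0[symmetric] nuf_def)
  also have "\<dots> = 0" by (simp add: ss_Suc_shift ss_def)
  finally show ?thesis .
qed

lemma lst_map: "map (\<lambda>j. D (w j)) [1..<Suc m] @ [D (- (\<Sum>j=1..m. w j))] = map D (lst m w)"
proof -
  have "lst m w = map (nuf m w) [0..<m] @ [nuf m w m]" unfolding lst_def by simp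
  moreover have "map (nuf m w) [0..<m] = map w [1..<Suc m]"
  proof -
    have "map (nuf m w) [0..<m] = map (\<lambda>i. w (Suc i)) [0..<m]" by (simp add: nuf_def)
    also have "\<dots> = map w (map Suc [0..<m])" by simp
    also have "\<dots> = map w [1..<Suc m]" by (simp only: map_Suc_upt) simp
    finally show ?thesis .
  qed
  ultimately show ?thesis by (simp add: nuf_def)
qed

lemma Dop_nonbohr: "nu \<notin> bohr H0 \<Longrightarrow> Dop H0 HI nu = 0"
  unfolding Dop_def bohr_def by (rule sum.neutral) auto

lemma mprod_snoc0: "mprod (xs @ [0]) = (0::complex^'n::finite^'n)"
  by (simp add: mprod_append mprod_Cons mprod_Nil)

lemma main_Mk:
  fixes H0 HI :: "complex^'n::finite^'n"
  assumes herm: "hermitian H0" and b: "\<beta> \<ge> 0"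
  shows "Mk H0 HI k \<beta> = ((-1) ^ k) *\<^sub>R (\<Sum>ns\<in>LZ (bohr H0) k. J k \<beta> ((!) ns) *\<^sub>R mprod (map (Dop H0 HI) ns))"
proof -
  have fin: "finite (LZ (bohr H0) k)"
    unfolding LZ_def using finite_LS[OF finite_bohr[OF herm]] by simp
  have "nested_int k \<beta> (\<lambda>ts. pinch H0 (mprod (map (HIt H0 HI) ts)))
      = nested_int k \<beta> (\<lambda>ts. \<Sum>ns\<in>LZ (bohr H0) k. Ef ((!) ns) ts *\<^sub>R mprod (map (Dop H0 HI) ns))"
    by (rule nested_int_cong) (simp add: integrand[OF herm] Ef_def)
  also have "\<dots> = (\<Sum>ns\<in>LZ (bohr H0) k. J k \<beta> ((!) ns) *\<^sub>R mprod (map (Dop H0 HI) ns))"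
    by (rule nested_lin[OF b fin])
  finally show ?thesis unfolding Mk_def by simp
qed

lemma prop_general:
  fixes H0 HI :: "complex ^'n::finite ^'n" and \<beta> :: real and k :: nat
  assumes herm: "hermitian H0" and b: "\<beta> \<ge> 0" and k1: "k \<ge> 1"
  shows "Mk H0 HI k \<beta> = ((-1) ^ k) *\<^sub>R
           (\<Sum>\<omega>\<in>{1..k-1} \<rightarrow>\<^sub>E bohr H0.
              gk k \<beta> \<omega> *\<^sub>R
              mprod (map (\<lambda>j. Dop H0 HI (\<omega> j)) [1..<k] @ [Dop H0 HI (- (\<Sum>j=1..k-1. \<omega> j))]))"
proof -
  obtain m where k: "k = Suc m" using k1 by (cases k) auto
  let ?B = "bohr H0" and ?D = "Dop H0 HI"
  define F where "F ns = J (Suc m) \<beta> ((!) ns) *\<^sub>R mprod (map ?D ns)" for ns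
  define T where "T = {w \<in> {1..m} \<rightarrow>\<^sub>E ?B. - (\<Sum>j=1..m. w j) \<in> ?B}"
  define inv where "inv ns = (\<lambda>j. if j \<in> {1..m} then ns ! (j - 1) else undefined)" for ns :: "real list"
  have trm2: "gk (Suc m) \<beta> w *\<^sub>R mprod (map (\<lambda>j. ?D (w j)) [1..<Suc m] @ [?D (- (\<Sum>j=1..m. w j))]) = F (lst m w)" for w
  proof -
    have "gk (Suc m) \<beta> w = J (Suc m) \<beta> ((!) (lst m w))"
      unfolding gk_J[OF b] by (rule J_cong) (simp add: lst_nth)
    then show ?thesis unfolding F_def lst_map[of ?D w m] by simp
  qed
  have finPi: "finite ({1..m} \<rightarrow>\<^sub>E ?B)" using finite_bohr[OF herm] by (simp add: finite_PiE)
  have s1: "(\<Sum>w\<in>{1..m} \<rightarrow>\<^sub>E ?B. F (lst m w)) = (\<Sum>w\<in>T. F (lst m w))"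
  proof (rule sum.mono_neutral_right[OF finPi])
    show "T \<subseteq> {1..m} \<rightarrow>\<^sub>E ?B" unfolding T_def by auto
    show "\<forall>w\<in>({1..m} \<rightarrow>\<^sub>E ?B) - T. F (lst m w) = 0"
    proof
      fix w assume "w \<in> ({1..m} \<rightarrow>\<^sub>E ?B) - T"
      then have "- (\<Sum>j=1..m. w j) \<notin> ?B" unfolding T_def by auto
      then have "?D (- (\<Sum>j=1..m. w j)) = 0" by (rule Dop_nonbohr)
      then show "F (lst m w) = 0" unfolding F_def lst_map[of ?D w m, symmetric] by (simp add: mprod_snoc0)
    qed
  qed
  have s2: "(\<Sum>w\<in>T. F (lst m w)) = (\<Sum>ns\<in>LZ ?B (Suc m). F ns)"
  proof (rule sum.reindex_bij_witness[of T inv "lst m"])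
    fix w assume w: "w \<in> T"
    show "inv (lst m w) = w"
    proof
      fix j show "inv (lst m w) j = w j"
      proof (cases "j \<in> {1..m}")
        case True
        then have "j - 1 < Suc m" "j - 1 < m" by auto
        then show ?thesis using True unfolding inv_def by (simp add: lst_nth nuf_def)
      next
        case False
        then show ?thesis using w unfolding inv_def T_def by (auto simp: PiE_def extensional_def)
      qed
    qed
    show "lst m w \<in> LZ ?B (Suc m)"
      unfolding LZ_def LS_def
    proof (intro CollectI conjI)
      show "set (lst m w) \<subseteq> ?B"
      proof
        fix x assume "x \<in> set (lst m w)"
        then have "x \<in> nuf m w ` {0..<Suc m}" unfolding lst_def by (simp only: set_map set_upt)
        then obtain i where i: "i < Suc m" "x = nuf m w i" by auto
        show "x \<in> ?B"
        proof (cases "i < m")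
          case True then show ?thesis using i w unfolding T_def nuf_def by (auto simp: PiE_def Pi_def)
        next
          case False then show ?thesis using i w unfolding T_def nuf_def by auto
        qed
      qed
    qed (simp_all add: lst_sum)
  next
    fix ns assume ns: "ns \<in> LZ ?B (Suc m)"
    then have len: "length ns = Suc m" and setB: "set ns \<subseteq> ?B" and sum0: "sum_list ns = 0"
      unfolding LZ_def LS_def by auto
    have invS: "inv ns (Suc i) = ns ! i" if "i < m" for i using that unfolding inv_def by simp
    have ssinv: "(\<Sum>j=1..m. inv ns j) = (\<Sum>i<m. ns ! i)"
      using ss_Suc_shift[of "inv ns" m] invS unfolding ss_def by simp
    have last: "ns ! m = - (\<Sum>i<m. ns ! i)"
    proof -
      have "sum_list ns = (\<Sum>i<Suc m. ns ! i)" unfolding sum_list_sum_nth len by (simp add: lessThan_atLeast0)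
      then show ?thesis using sum0 by simp
    qed
    show "lst m (inv ns) = ns"
    proof (rule nth_equalityI)
      show "length (lst m (inv ns)) = length ns" using len by simp
      fix i assume "i < length (lst m (inv ns))"
      then have i: "i < Suc m" by simp
      show "lst m (inv ns) ! i = ns ! i"
      proof (cases "i < m")
        case True then show ?thesis using i by (simp add: lst_nth nuf_def invS)
      next
        case False then have "i = m" using i by simp
        then show ?thesis using i last ssinv by (simp add: lst_nth nuf_def)
      qed
    qed
    show "inv ns \<in> T"
      unfolding T_def
    proof (intro CollectI conjI)
      show "inv ns \<in> {1..m} \<rightarrow>\<^sub>E ?B"
      proof (rule PiE_I)
        fix j assume "j \<in> {1..m}"
        then have "j - 1 < length ns" using len by auto
        then have "ns ! (j - 1) \<in> ?B" using setB nth_mem by blast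
        then show "inv ns j \<in> ?B" using \<open>j \<in> {1..m}\<close> unfolding inv_def by simp
      next
        fix j assume "j \<notin> {1..m}" then show "inv ns j = undefined" unfolding inv_def by (rule if_not_P)
      qed
      have "ns ! m \<in> ?B" using setB len nth_mem[of m ns] by auto
      then show "- (\<Sum>j=1..m. inv ns j) \<in> ?B" using ssinv last by simp
    qed
  qed simp
  show ?thesis
    unfolding k main_Mk[OF herm b] using s1 s2 trm2 by (simp add: F_def)
qed

theorem proposition2:
  fixes H0 HI :: "complex ^'n::finite ^'n" and \<beta> :: real and k :: nat
  assumes "hermitian H0" and "hermitian HI" and "\<beta> > 0" and "k \<ge> 1"
  shows "Mk H0 HI k \<beta> = ((-1) ^ k) *\<^sub>R
           (\<Sum>\<omega>\<in>{1..k-1} \<rightarrow>\<^sub>E bohr H0.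
              gk k \<beta> \<omega> *\<^sub>R
              mprod (map (\<lambda>j. Dop H0 HI (\<omega> j)) [1..<k] @ [Dop H0 HI (- (\<Sum>j=1..k-1. \<omega> j))]))
         \<and> Mk H0 HI 1 \<beta> = (- \<beta>) *\<^sub>R Dop H0 HI 0"
proof
  have b: "\<beta> \<ge> 0" using assms(3) by simp
  show "Mk H0 HI k \<beta> = ((-1) ^ k) *\<^sub>R
           (\<Sum>\<omega>\<in>{1..k-1} \<rightarrow>\<^sub>E bohr H0.
              gk k \<beta> \<omega> *\<^sub>R
              mprod (map (\<lambda>j. Dop H0 HI (\<omega> j)) [1..<k] @ [Dop H0 HI (- (\<Sum>j=1..k-1. \<omega> j))]))"
    by (rule prop_general[OF assms(1) b assms(4)])
  have g: "gk 1 \<beta> (\<lambda>x. undefined) = \<beta>"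
    unfolding gk_def nondeg_def gexpr_def by simp
  show "Mk H0 HI 1 \<beta> = (- \<beta>) *\<^sub>R Dop H0 HI 0"
    using prop_general[OF assms(1) b, of 1 HI] g by (simp add: mprod_Cons mprod_Nil)
qed

end
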